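(* Let $d\in\mathbb{Z}_2$ with $d\equiv0\pmod 4$ and $\sqrt d\notin\mathbb{Z}_2$, and $f(x)=x^2+x-d$ on $\mathbb{Z}_2$. Then $f(1+2\mathbb{Z}_2)\subset 2\mathbb{Z}_2$ and $2\mathbb{Z}_2$ is a disjoint union of finitely many minimal components. More precisely, let $n_0=\lfloor v_2(d)/2\rfloor+1$. (1) If $v_2(d)=2$ and $v_2(d-4)=3$, then $2\mathbb{Z}_2$ consists of the three minimal components $4\mathbb{Z}_2$, $2+8\mathbb{Z}_2$, $6+8\mathbb{Z}_2$. (2) If $v_2(d)=2$ and $v_2(d-4)=4$, then $2\mathbb{Z}_2$ consists of the five minimal components $4\mathbb{Z}_2$, $2+16\mathbb{Z}_2$, $6+16\mathbb{Z}_2$, $10+16\mathbb{Z}_2$, $14+16\mathbb{Z}_2$. (3) If $v_2(d)\ge3$ and $v_2(d)$ is odd, then $2\mathbb{Z}_2=E_1\sqcup E_2$ with $$E_1=\bigsqcup_{2\le n\le n_0}\big(2^{n-1}+2^n\mathbb{Z}_2\big)-\{\text{I-}[n-2]\},\qquad E_2=2^{n_0}\mathbb{Z}_2-\{\text{I-}[n_0-1]\}.$$ (4) If $v_2(d)\ge3$ and $v_2(d)$ is even, then $2\mathbb{Z}_2=E'_1\sqcup E'_2\sqcup E'_3$ with $$E'_1=\bigsqcup_{2\le n\le n_0-1}\big(2^{n-1}+2^n\mathbb{Z}_2\big)-\{\text{I-}[n-2]\},\quad E'_2=2^{n_0}\mathbb{Z}_2-\{\text{I-}[n_0-2]\},$$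 $$E'_3=\big(2^{n_0-1}+2^{n_0}\mathbb{Z}_2\big)-\{\text{I-}[v_2(d-2^{v_2(d)})-n_0]\}.$$
   Context: $v_2$ is the $2$-adic valuation. A minimal component of $f$ is a clopen set $E$ with $f(E)\subset E$ and $f:E\to E$ minimal (all orbits dense). For $n\ge1$, $f_n$ is the induced map on $\mathbb{Z}/2^n\mathbb{Z}$, $f_n(x\bmod 2^n)=f(x)\bmod 2^n$. A cycle of $f_n$ (at level $n$) of length $k$ is a tuple $\sigma=(x_1,\dots,x_k)$ of distinct elements with $f_n(x_i)=x_{i+1}$, $f_n(x_k)=x_1$. The set $X_\sigma=\{y\in\mathbb{Z}/2^{n+1}\mathbb{Z}:y\bmod 2^n\in\sigma\}$ is $f_{n+1}$-invariant; its cycles are the lifts of $\sigma$. $\sigma$ grows if $X_\sigma$ is a single cycle of length $2k$ and splits if it is a union of two cycles of length $k$. For $k\ge0$, "$\sigma$ splits $k$ times and then its lifts grow forever" means every cycle at levels $n,\dots,n+k-1$ lying above $\sigma$ (reducing mod $2^n$ into $\sigma$) splits, and every cycle at every level $\ge n+k$ lying above $\sigma$ grows. A ball $F=x+2^n\mathbb{Z}_2$ with $(x\bmod 2^n)$ a fixed point of $f_n$ is of type I-$[k]$ if this 1-cycle splits $k$ times and then its lifts grow forever (then $F$ is a disjoint union of $2^k$ balls of radius $2^{-n-k}$, each a minimal component). $E=\bigsqcup_{n\in J}F_n-\{\text{I-}[k]\}$ means $E$ is the disjoint union of the $F_n$, each of type I-$[k]$ ($k$ possibly depending on $n$ as indicated);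 $F-\{\text{I-}[k]\}$ for a single set means $F$ is of type I-$[k]$. *)

theory Defs
  imports Main
begin

text \<open>A 2-adic integer x is represented by the sequence of its residues
  x n = x mod 2^n, with 0 <= x n < 2^n and x n = x (n+1) mod 2^n.\<close>

definition padic2 :: "(nat \<Rightarrow> int) \<Rightarrow> bool" where
  "padic2 x \<longleftrightarrow> (\<forall>n. 0 \<le> x n \<and> x n < 2 ^ n) \<and> (\<forall>n. x n = x (Suc n) mod 2 ^ n)"

definition z2_of_int :: "int \<Rightarrow> nat \<Rightarrow> int" where
  "z2_of_int k = (\<lambda>n. k mod 2 ^ n)"

definition z2_add :: "(nat \<Rightarrow> int) \<Rightarrow> (nat \<Rightarrow> int) \<Rightarrow> nat \<Rightarrow> int" where
  "z2_add x y = (\<lambda>n. (x n + y n) mod 2 ^ n)"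

definition z2_sub :: "(nat \<Rightarrow> int) \<Rightarrow> (nat \<Rightarrow> int) \<Rightarrow> nat \<Rightarrow> int" where
  "z2_sub x y = (\<lambda>n. (x n - y n) mod 2 ^ n)"

definition z2_mult :: "(nat \<Rightarrow> int) \<Rightarrow> (nat \<Rightarrow> int) \<Rightarrow> nat \<Rightarrow> int" where
  "z2_mult x y = (\<lambda>n. (x n * y n) mod 2 ^ n)"

text \<open>2-adic valuation of a nonzero 2-adic integer (junk value for 0; it is
  only applied to nonzero elements under the hypotheses of the theorem).\<close>
definition v2 :: "(nat \<Rightarrow> int) \<Rightarrow> nat" where
  "v2 x = (LEAST n. x (Suc n) \<noteq> 0)"

definition ball2 :: "int \<Rightarrow> nat \<Rightarrow> (nat \<Rightarrow> int) set" where
  "ball2 a n = {x. padic2 x \<and> x n = a mod 2 ^ n}"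

definition fmap :: "(nat \<Rightarrow> int) \<Rightarrow> (nat \<Rightarrow> int) \<Rightarrow> nat \<Rightarrow> int" where
  "fmap d x = z2_sub (z2_add (z2_mult x x) x) d"

definition clopen2 :: "(nat \<Rightarrow> int) set \<Rightarrow> bool" where
  "clopen2 E \<longleftrightarrow> E \<subseteq> Collect padic2
     \<and> (\<forall>x\<in>E. \<exists>n. ball2 (x n) n \<subseteq> E)
     \<and> (\<forall>x. padic2 x \<and> x \<notin> E \<longrightarrow> (\<exists>n. ball2 (x n) n \<inter> E = {}))"

definition orbit_dense :: "((nat \<Rightarrow> int) \<Rightarrow> nat \<Rightarrow> int) \<Rightarrow> (nat \<Rightarrow> int) \<Rightarrow> (nat \<Rightarrow> int) set \<Rightarrow> bool" where
  "orbit_dense f x E \<longleftrightarrow> (\<forall>y\<in>E. \<forall>n. \<exists>j. (f ^^ j) x \<in> ball2 (y n) n)"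

definition minimal_component :: "(nat \<Rightarrow> int) \<Rightarrow> (nat \<Rightarrow> int) set \<Rightarrow> bool" where
  "minimal_component d E \<longleftrightarrow> E \<noteq> {} \<and> clopen2 E \<and> fmap d ` E \<subseteq> E
     \<and> (\<forall>x\<in>E. orbit_dense (fmap d) x E)"

section \<open>Finite level dynamics f_n on Z/2^n Z (represented by {0..<2^n})\<close>

definition fn :: "(nat \<Rightarrow> int) \<Rightarrow> nat \<Rightarrow> int \<Rightarrow> int" where
  "fn d m a = (a ^ 2 + a - d m) mod 2 ^ m"

text \<open>A cycle of f_m, represented by its underlying set (a single orbit).\<close>
definition cycle_at :: "(nat \<Rightarrow> int) \<Rightarrow> nat \<Rightarrow> int set \<Rightarrow> bool" where
  "cycle_at d m C \<longleftrightarrow> C \<subseteq> {0..<2 ^ m} \<and> C \<noteq> {}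
     \<and> (\<forall>a\<in>C. C = range (\<lambda>j. (fn d m ^^ j) a))"

definition lifts :: "nat \<Rightarrow> int set \<Rightarrow> int set" where
  "lifts m C = {y. 0 \<le> y \<and> y < 2 ^ Suc m \<and> y mod 2 ^ m \<in> C}"

definition grows :: "(nat \<Rightarrow> int) \<Rightarrow> nat \<Rightarrow> int set \<Rightarrow> bool" where
  "grows d m C \<longleftrightarrow> cycle_at d (Suc m) (lifts m C)"

definition splits :: "(nat \<Rightarrow> int) \<Rightarrow> nat \<Rightarrow> int set \<Rightarrow> bool" where
  "splits d m C \<longleftrightarrow> (\<exists>C1 C2. cycle_at d (Suc m) C1 \<and> cycle_at d (Suc m) C2
     \<and> C1 \<inter> C2 = {} \<and> C1 \<union> C2 = lifts m C \<and> card C1 = card C \<and> card C2 = card C)"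

definition split_then_grow :: "(nat \<Rightarrow> int) \<Rightarrow> nat \<Rightarrow> int set \<Rightarrow> nat \<Rightarrow> bool" where
  "split_then_grow d n S k \<longleftrightarrow>
     (\<forall>m C. n \<le> m \<and> m < n + k \<and> cycle_at d m C \<and> (\<forall>y\<in>C. y mod 2 ^ n \<in> S) \<longrightarrow> splits d m C)
   \<and> (\<forall>m C. n + k \<le> m \<and> cycle_at d m C \<and> (\<forall>y\<in>C. y mod 2 ^ n \<in> S) \<longrightarrow> grows d m C)"

definition typeI :: "(nat \<Rightarrow> int) \<Rightarrow> int \<Rightarrow> nat \<Rightarrow> nat \<Rightarrow> bool" where
  "typeI d a n k \<longleftrightarrow> fn d n (a mod 2 ^ n) = a mod 2 ^ n \<and> split_then_grow d n {a mod 2 ^ n} k"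

end

theory Submission
  imports Defs
begin


lemma dvd_pow2: "m \<le> n \<Longrightarrow> (2::int)^m dvd 2^n"
  by (simp add: le_imp_power_dvd)

lemma mod_eqI: "(M::int) dvd (X - r) \<Longrightarrow> 0 \<le> r \<Longrightarrow> r < M \<Longrightarrow> X mod M = r"
  by (metis mod_eq_dvd_iff mod_pos_pos_trivial)

lemma padic_range: "padic2 x \<Longrightarrow> 0 \<le> x n \<and> x n < 2^n"
  unfolding padic2_def by (drule conjunct1) (erule spec)

lemma padic_step: "padic2 x \<Longrightarrow> x n = x (Suc n) mod 2^n"
  unfolding padic2_def by (drule conjunct2) (erule spec)

lemma padic2I: "(\<And>n. 0 \<le> x n) \<Longrightarrow> (\<And>n. x n < 2^n) \<Longrightarrow> (\<And>n. x n = x (Suc n) mod 2^n) \<Longrightarrow> padic2 x"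
  unfolding padic2_def by blast

lemma padic_coh: assumes "padic2 x" "m \<le> n" shows "x m = x n mod 2^m"
  using assms(2)
proof (induction n rule: dec_induct)
  case base
  have "0 \<le> x m" "x m < 2^m" using padic_range[OF assms(1), of m] by auto
  then show ?case by (rule mod_pos_pos_trivial[symmetric])
next
  case (step n)
  have h: "x n = x (Suc n) mod 2^n" using assms(1) by (rule padic_step)
  have "x m = x n mod 2^m" by (rule step(3))
  also have "\<dots> = (x (Suc n) mod 2^n) mod 2^m" by (subst h) (rule refl)
  also have "\<dots> = x (Suc n) mod 2^m" by (rule mod_mod_cancel[OF dvd_pow2]) (use step(1) in simp)
  finally show ?case .
qed

lemma qcong: "(a::int) mod m = a' mod m \<Longrightarrow> b mod m = b' mod m \<Longrightarrow> (a^2 + a - b) mod m = (a'^2+a'-b') mod m"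
proof -
  assume h1: "a mod m = a' mod m" and h2: "b mod m = b' mod m"
  have "a^2 mod m = (a mod m)^2 mod m" by (rule power_mod[symmetric])
  also have "\<dots> = (a' mod m)^2 mod m" by (simp only: h1)
  also have "\<dots> = a'^2 mod m" by (rule power_mod)
  finally have "a^2 mod m = a'^2 mod m" .
  then have "(a^2 + a) mod m = (a'^2 + a') mod m" using h1 by (rule mod_add_cong)
  then show ?thesis using h2 by (rule mod_diff_cong)
qed

lemma fmap_n: "fmap d x n = ((x n)^2 + x n - d n) mod 2^n"
  by (simp add: fmap_def z2_sub_def z2_add_def z2_mult_def mod_simps power2_eq_square)

lemma padic_fmap: assumes "padic2 d" "padic2 x" shows "padic2 (fmap d x)"
proof (rule padic2I)
  fix n
  show "0 \<le> fmap d x n" "fmap d x n < 2^n" by (simp_all add: fmap_n)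
  have "fmap d x (Suc n) mod 2^n = ((x (Suc n))^2 + x (Suc n) - d (Suc n)) mod 2^n"
    by (simp add: fmap_n mod_mod_cancel)
  also have "\<dots> = ((x n)^2 + x n - d n) mod 2^n"
    apply (rule qcong)
    using padic_coh[OF assms(2), of n "Suc n"] padic_coh[OF assms(1), of n "Suc n"] by simp_all
  finally show "fmap d x n = fmap d x (Suc n) mod 2^n" by (simp add: fmap_n)
qed

lemma fmap_fn: "fmap d y n = fn d n (y n)" by (simp add: fmap_n fn_def)

lemma fmap_iter: assumes "padic2 d" "padic2 x"
  shows "padic2 ((fmap d ^^ j) x) \<and> ((fmap d ^^ j) x) n = (fn d n ^^ j) (x n)"
proof (induction j)
  case 0 then show ?case using assms by simp
next
  case (Suc j)
  have e: "(fmap d ^^ Suc j) x = fmap d ((fmap d ^^ j) x)" by simp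
  have "((fmap d ^^ Suc j) x) n = fn d n (((fmap d ^^ j) x) n)" unfolding e by (rule fmap_fn)
  also have "\<dots> = (fn d n ^^ Suc j) (x n)" using Suc by simp
  finally show ?case unfolding e using padic_fmap[OF assms(1)] Suc by blast
qed

lemma padic_of_int: "padic2 (z2_of_int c)"
  by (rule padic2I) (simp_all add: z2_of_int_def mod_mod_cancel)

definition gD :: "int \<Rightarrow> int \<Rightarrow> int" where "gD D z = z^2 + z - D"
lemma gD_eq: "gD D z = z^2 + z - D" by (simp add: gD_def)

lemma gD_mod: "(a::int) mod p = b mod p \<Longrightarrow> gD D a mod p = gD D b mod p"
  unfolding gD_eq by (rule qcong) simp_all

lemma gD_iter_mod: "(gD D ^^ j) (x mod p) mod p = (gD D ^^ j) x mod p"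
proof (induction j)
  case 0 then show ?case by simp
next
  case (Suc j)
  show ?case unfolding funpow.simps comp_def by (rule gD_mod[OF Suc])
qed

lemma fn_gD: "D mod 2^m = d m mod 2^m \<Longrightarrow> fn d m (z mod 2^m) = gD D z mod 2^m"
  unfolding fn_def gD_eq by (rule qcong) simp_all

lemma fn_iter: assumes "0 \<le> a" "a < 2^m" "D mod 2^m = d m mod 2^m"
  shows "(fn d m ^^ j) a = (gD D ^^ j) a mod 2^m"
proof (induction j)
  case 0 then show ?case using assms by simp
next
  case (Suc j)
  have e1: "(fn d m ^^ Suc j) a = fn d m ((fn d m ^^ j) a)" by (rule funpow.simps(2)[THEN fun_cong, unfolded comp_def])
  have e2: "(gD D ^^ Suc j) a = gD D ((gD D ^^ j) a)" by (rule funpow.simps(2)[THEN fun_cong, unfolded comp_def])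
  show ?case unfolding e1 e2 Suc by (rule fn_gD[of D m d, OF assms(3)])
qed

lemma funpow_fix: "f b = b \<Longrightarrow> (f ^^ j) b = b"
  by (induction j) simp_all



lemma mod_to_dvd: "(X::int) mod M = r \<Longrightarrow> 0 \<le> r \<Longrightarrow> r < M \<Longrightarrow> M dvd (X - r)"
  by (metis mod_eq_dvd_iff mod_pos_pos_trivial)

lemma mod_le: "n \<le> N \<Longrightarrow> (u::int) mod 2^N = w mod 2^N \<Longrightarrow> u mod 2^n = w mod 2^n"
  by (metis mod_mod_cancel dvd_pow2)

lemma cls_even: "1 \<le> n \<Longrightarrow> even a \<Longrightarrow> (y::int) mod 2^n = a mod 2^n \<Longrightarrow> even y"
  using mod_le[of 1 n y a] by (simp add: even_iff_mod_2_eq_zero)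

definition Cn :: "int \<Rightarrow> int \<Rightarrow> nat \<Rightarrow> nat \<Rightarrow> bool" where
  "Cn D a n N \<longleftrightarrow> (\<forall>y::int. y mod 2^n = a mod 2^n \<longrightarrow> (y^2 - D) mod 2^(Suc N) = 2^N)"

lemma C_step: "Cn D a n N \<Longrightarrow> y mod 2^n = a mod 2^n \<Longrightarrow> 2^(Suc N) dvd (gD D y - y - 2^N)"
  unfolding Cn_def gD_eq
  by (drule spec[of _ y]) (auto intro: mod_to_dvd[of _ _ "2^N", simplified algebra_simps])

lemma inv1: "Cn D a n N \<Longrightarrow> y mod 2^n = a mod 2^n \<Longrightarrow> gD D y mod 2^N = y mod 2^N"
proof -
  assume "Cn D a n N" "y mod 2^n = a mod 2^n"
  then have "2^(Suc N) dvd (gD D y - y - 2^N)" by (rule C_step)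
  then have "2^N dvd (gD D y - y - 2^N)" by (rule dvd_trans[rotated]) simp
  then have "2^N dvd (gD D y - y)" by (metis dvd_add_left_iff diff_add_cancel dvd_refl)
  then show ?thesis by (simp add: mod_eq_dvd_iff)
qed

lemma invj: assumes "Cn D a n N" "n \<le> N" "y mod 2^n = a mod 2^n"
  shows "(gD D ^^ j) y mod 2^N = y mod 2^N"
proof (induction j)
  case 0 then show ?case by simp
next
  case (Suc j)
  have c: "(gD D ^^ j) y mod 2^n = a mod 2^n" using mod_le[OF assms(2) Suc] assms(3) by simp
  have "(gD D ^^ Suc j) y = gD D ((gD D ^^ j) y)" by simp
  then show ?case using inv1[OF assms(1) c] Suc by simp
qed

lemma stepP: assumes "even u" "4 dvd (h'::int)"
  shows "(4*h') dvd (gD D (u+h') - gD D u - h')"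
proof -
  have e: "gD D (u+h') - gD D u - h' = h' * (2*u + h')" by (simp add: gD_eq algebra_simps power2_eq_square)
  obtain k where k: "u = 2*k" using assms(1) by (rule evenE)
  obtain l where l: "h' = 4*l" using assms(2) by (rule dvdE)
  have "h' * (2*u + h') = (4*h') * (k+l)" unfolding k l by (simp add: algebra_simps)
  then show ?thesis unfolding e by (rule dvdI)
qed

lemma Pj: assumes "Cn D a n N" "1 \<le> n" "n \<le> N" "even a"
  shows "x mod 2^n = a mod 2^n \<Longrightarrow> 4 dvd h \<Longrightarrow> (4*h) dvd ((gD D ^^ j) (x+h) - (gD D ^^ j) x - h)"
proof (induction j arbitrary: x h)
  case 0 then show ?case by simp
next
  case (Suc j)
  define u where "u = (gD D ^^ j) x"
  define h' where "h' = (gD D ^^ j) (x+h) - u"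
  have "(4*h) dvd ((gD D ^^ j)(x+h) - (gD D ^^ j) x - h)" by (rule Suc.IH[OF Suc.prems])
  then have IH: "(4*h) dvd (h' - h)" unfolding u_def h'_def by (simp add: algebra_simps)
  then obtain z where z: "h' - h = 4*h*z" by (rule dvdE)
  then have zz: "h' = h * (1 + 4*z)" by (simp add: algebra_simps)
  then have hh: "h dvd h'" by (rule dvdI)
  obtain l where l: "h = 4*l" using Suc.prems(2) by (rule dvdE)
  have "h' = 4 * (l * (1+4*z))" unfolding zz l by simp
  then have h4: "4 dvd h'" by (rule dvdI)
  have "u mod 2^N = x mod 2^N" unfolding u_def by (rule invj[OF assms(1) assms(3) Suc(2)])
  then have "u mod 2^n = x mod 2^n" by (rule mod_le[OF assms(3)])
  then have "u mod 2^n = a mod 2^n" using Suc.prems(1) by simp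
  then have ue: "even u" by (rule cls_even[OF assms(2) assms(4)])
  have "(4*h') dvd (gD D (u+h') - gD D u - h')" by (rule stepP[OF ue h4])
  moreover have "(4*h) dvd (4*h')" using hh by simp
  ultimately have A: "(4*h) dvd (gD D (u+h') - gD D u - h')" by (rule dvd_trans[rotated])
  have eq: "(gD D ^^ Suc j) (x+h) - (gD D ^^ Suc j) x - h = (gD D (u+h') - gD D u - h') + (h' - h)"
    unfolding u_def h'_def by simp
  show ?case unfolding eq by (rule dvd_add[OF A IH])
qed

lemma Gk: assumes C: "Cn D a n N" and n1: "1 \<le> n" and nN: "n \<le> N" and N2: "2 \<le> N" and ea: "even a"
  shows "x mod 2^n = a mod 2^n \<Longrightarrow> 2^(N+k+1) dvd ((gD D ^^ (2^k)) x - x - 2^(N+k))"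
proof (induction k arbitrary: x)
  case 0
  have "2^(Suc N) dvd (gD D x - x - 2^N)" by (rule C_step[OF C 0])
  then show ?case by simp
next
  case (Suc k)
  define G where "G = gD D ^^ (2^k)"
  have GG: "(gD D ^^ (2^Suc k)) x = G (G x)"
  proof -
    have "(2::nat)^Suc k = 2^k + 2^k" by simp
    then show ?thesis unfolding G_def by (simp only: funpow_add comp_def)
  qed
  define P where "P = (2::int)^(N+k)"
  have P1: "(2::int)^(N+k+1) = 2*P" unfolding P_def by simp
  have P2: "(2::int)^(N + Suc k + 1) = 4*P" unfolding P_def by simp
  have P3: "(2::int)^(N + Suc k) = 2*P" unfolding P_def by simp
  have "2^(N+k+1) dvd (G x - x - 2^(N+k))" unfolding G_def by (rule Suc.IH[OF Suc.prems])
  then obtain s where s: "G x - x - P = 2*P*s" unfolding P1 P_def by (auto elim!: dvdE)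
  define h where "h = G x - x"
  have hs: "h = P * (1 + 2*s)" using s unfolding h_def by (simp add: algebra_simps)
  have "(2::int)^2 dvd 2^(N+k)" by (rule dvd_pow2) (use N2 in simp)
  then have "4 dvd P" unfolding P_def by simp
  then have h4: "4 dvd h" unfolding hs by simp
  have "(4*h) dvd ((gD D ^^ (2^k)) (x+h) - (gD D ^^ (2^k)) x - h)"
    by (rule Pj[OF C n1 nN ea Suc.prems h4])
  then obtain z where z: "G (x+h) - G x - h = 4*h*z" unfolding G_def by (rule dvdE)
  have xh: "G x = x + h" unfolding h_def by simp
  have "(gD D ^^ (2^Suc k)) x - x - 2^(N + Suc k) = G (x+h) - x - 2*P" unfolding GG P3 xh[symmetric] ..
  also have "\<dots> = 4*h*z + 2*h - 2*P" using z xh by (simp add: algebra_simps)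
  also have "\<dots> = (4*P) * ((1+2*s)*z + s)" unfolding hs by (simp add: algebra_simps)
  finally show ?case unfolding P2 by (rule dvdI)
qed

lemma Tk: assumes C: "Cn D a n N" and n1: "1 \<le> n" and nN: "n \<le> N" and N2: "2 \<le> N" and ea: "even a"
    and x: "x mod 2^n = a mod 2^n" and y: "y mod 2^n = a mod 2^n" and xy: "x mod 2^N = y mod 2^N"
  shows "\<exists>j. (gD D ^^ j) x mod 2^(N+k) = y mod 2^(N+k)"
proof (induction k)
  case 0 then show ?case using xy by (intro exI[of _ 0]) simp
next
  case (Suc k)
  then obtain j where j: "(gD D ^^ j) x mod 2^(N+k) = y mod 2^(N+k)" by blast
  define z where "z = (gD D ^^ j) x"
  have "z mod 2^N = x mod 2^N" unfolding z_def by (rule invj[OF C nN x])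
  then have "z mod 2^n = x mod 2^n" by (rule mod_le[OF nN])
  then have zc: "z mod 2^n = a mod 2^n" using x by simp
  show ?case
  proof (cases "z mod 2^(N+k+1) = y mod 2^(N+k+1)")
    case True then show ?thesis unfolding z_def by (intro exI[of _ j]) simp
  next
    case False
    define P where "P = (2::int)^(N+k)"
    have P1: "(2::int)^(N+k+1) = 2*P" unfolding P_def by simp
    have "P dvd (z - y)" using j unfolding z_def P_def by (simp add: mod_eq_dvd_iff)
    then obtain t where t: "z - y = P * t" by (rule dvdE)
    have "odd t"
    proof
      assume "even t"
      then obtain t' where "t = 2*t'" by (rule evenE)
      then have "z - y = (2*P) * t'" using t by simp
      then have "(2*P) dvd (z - y)" by (rule dvdI)
      then show False using False unfolding P1 by (simp add: mod_eq_dvd_iff)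
    qed
    then obtain r where r: "t + 1 = 2*r" by (metis evenE odd_even_add odd_one)
    have "2^(N+k+1) dvd ((gD D ^^ (2^k)) z - z - 2^(N+k))" by (rule Gk[OF C n1 nN N2 ea zc])
    then obtain s where s: "(gD D ^^ (2^k)) z - z - P = 2*P*s" unfolding P1 P_def by (auto elim!: dvdE)
    have "(gD D ^^ (2^k)) z - y = (2*P) * (r + s)"
    proof -
      have "(gD D ^^ (2^k)) z - y = (z - y) + P + 2*P*s" using s by (simp add: algebra_simps)
      also have "\<dots> = P * (t + 1) + 2*P*s" unfolding t by (simp add: algebra_simps)
      also have "\<dots> = (2*P) * (r + s)" unfolding r by (simp add: algebra_simps)
      finally show ?thesis .
    qed
    then have "(2*P) dvd ((gD D ^^ (2^k)) z - y)" by (rule dvdI)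
    then have "(gD D ^^ (2^k)) z mod 2^(N + Suc k) = y mod 2^(N + Suc k)"
      using P1 by (simp add: mod_eq_dvd_iff)
    moreover have "(gD D ^^ (2^k + j)) x = (gD D ^^ (2^k)) z" unfolding z_def by (simp only: funpow_add comp_def)
    ultimately show ?thesis by metis
  qed
qed



definition Qk :: "(nat \<Rightarrow> int) \<Rightarrow> int \<Rightarrow> nat \<Rightarrow> nat \<Rightarrow> bool" where
  "Qk d a n N \<longleftrightarrow> Cn (d (Suc N)) a n N"

lemma Cn_change: "Cn D a n N \<Longrightarrow> D' mod 2^(Suc N) = D mod 2^(Suc N) \<Longrightarrow> Cn D' a n N"
  unfolding Cn_def
proof (intro allI impI)
  fix y :: int
  assume h: "\<forall>y. y mod 2 ^ n = a mod 2 ^ n \<longrightarrow> (y\<^sup>2 - D) mod 2 ^ Suc N = 2 ^ N"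
    and e: "D' mod 2^(Suc N) = D mod 2^(Suc N)" and y: "y mod 2 ^ n = a mod 2 ^ n"
  have "(y\<^sup>2 - D') mod 2 ^ Suc N = (y\<^sup>2 - D) mod 2 ^ Suc N" by (rule mod_diff_cong[OF refl e])
  then show "(y\<^sup>2 - D') mod 2 ^ Suc N = 2 ^ N" using h y by simp
qed

lemma Qk_Cn: assumes "padic2 d" "Qk d a n N" "Suc N \<le> M" shows "Cn (d M) a n N"
proof -
  have "d (Suc N) = d M mod 2^(Suc N)" by (rule padic_coh[OF assms(1,3)])
  then have "d M mod 2^(Suc N) = d (Suc N) mod 2^(Suc N)" by simp
  then show ?thesis using Cn_change assms(2) unfolding Qk_def by blast
qed

lemma FIX: assumes d: "padic2 d" and Q: "Qk d a n N" and y: "y mod 2^n = a mod 2^n" and M: "M \<le> N"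
  shows "(y^2 + y - d M) mod 2^M = y mod 2^M"
proof -
  have "2^(Suc N) dvd (gD (d (Suc N)) y - y - 2^N)" using Q y unfolding Qk_def by (rule C_step)
  then have "2^M dvd (gD (d (Suc N)) y - y - 2^N)" by (rule dvd_trans[rotated]) (rule dvd_pow2, use M in simp)
  moreover have "(2::int)^M dvd 2^N" by (rule dvd_pow2[OF M])
  ultimately have "2^M dvd ((gD (d (Suc N)) y - y - 2^N) + 2^N)" by (rule dvd_add)
  then have A: "2^M dvd (y^2 - d (Suc N))" unfolding gD_eq by simp
  have "d M = d (Suc N) mod 2^M" by (rule padic_coh[OF d]) (use M in simp)
  then have B: "2^M dvd (d (Suc N) - d M)" by (simp add: mod_eq_dvd_iff[symmetric])
  have "(y^2 + y - d M) - y = (y^2 - d (Suc N)) + (d (Suc N) - d M)" by simp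
  then have "2^M dvd ((y^2 + y - d M) - y)" using dvd_add[OF A B] by simp
  then show ?thesis by (simp add: mod_eq_dvd_iff)
qed

lemma cyc1: "0 \<le> b \<Longrightarrow> b < 2^M \<Longrightarrow> fn d M b = b \<Longrightarrow> cycle_at d M {b}"
  unfolding cycle_at_def by (auto simp: funpow_fix)

lemma lifts1: assumes "0 \<le> b" "b < 2^m" shows "lifts m {b} = {b, b + 2^m}"
proof (rule set_eqI)
  fix y
  show "y \<in> lifts m {b} \<longleftrightarrow> y \<in> {b, b + 2^m}"
  proof
    assume "y \<in> lifts m {b}"
    then have y: "0 \<le> y" "y < 2^Suc m" "y mod 2^m = b" unfolding lifts_def by auto
    define q where "q = y div 2^m"
    define P where "P = (2::int)^m"
    have P0: "P > 0" unfolding P_def by simp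
    have yq: "y = P * q + b" using y(3) unfolding q_def P_def by (metis div_mult_mod_eq mult.commute)
    have yP: "y < 2*P" using y(2) unfolding P_def by simp
    have "q < 2"
    proof (rule ccontr)
      assume "\<not> q < 2"
      then have "P * 2 \<le> P * q" using P0 by (intro mult_left_mono) auto
      then show False using yq yP assms(1) by simp
    qed
    moreover have "q \<ge> 0"
    proof (rule ccontr)
      assume "\<not> q \<ge> 0"
      then have "P * q \<le> P * (-1)" using P0 by (intro mult_left_mono) auto
      then show False using yq y(1) assms(2) unfolding P_def by simp
    qed
    ultimately have "q = 0 \<or> q = 1" by auto
    then show "y \<in> {b, b + 2^m}" using yq unfolding P_def by auto
  next
    assume "y \<in> {b, b + 2^m}"
    then show "y \<in> lifts m {b}" unfolding lifts_def using assms by auto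
  qed
qed

lemma ball_mem: "x \<in> ball2 c N \<longleftrightarrow> padic2 x \<and> x N = c mod 2^N"
  by (simp add: ball2_def)

lemma L2: assumes d: "padic2 d" and ec: "even c" and N2: "2 \<le> N" and Q: "Qk d c N N"
  shows "minimal_component d (ball2 c N)"
  unfolding minimal_component_def
proof (intro conjI)
  have "z2_of_int c \<in> ball2 c N" unfolding ball_mem using padic_of_int by (simp add: z2_of_int_def)
  then show "ball2 c N \<noteq> {}" by blast
next
  show "clopen2 (ball2 c N)" unfolding clopen2_def
  proof (intro conjI ballI allI impI)
    show "ball2 c N \<subseteq> Collect padic2" unfolding ball2_def by auto
  next
    fix x assume "x \<in> ball2 c N"
    then have "x N = c mod 2^N" unfolding ball_mem by simp
    then have "ball2 (x N) N \<subseteq> ball2 c N" unfolding ball2_def by auto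
    then show "\<exists>n. ball2 (x n) n \<subseteq> ball2 c N" by blast
  next
    fix x assume h: "padic2 x \<and> x \<notin> ball2 c N"
    have "ball2 (x N) N \<inter> ball2 c N = {}"
    proof (rule ccontr)
      assume "ball2 (x N) N \<inter> ball2 c N \<noteq> {}"
      then obtain y where "y N = x N mod 2^N" "y N = c mod 2^N" unfolding ball2_def by auto
      moreover have "x N mod 2^N = x N" using padic_range[of x N] h by simp
      ultimately have "x N = c mod 2^N" by simp
      then show False using h unfolding ball_mem by simp
    qed
    then show "\<exists>n. ball2 (x n) n \<inter> ball2 c N = {}" by blast
  qed
next
  show "fmap d ` ball2 c N \<subseteq> ball2 c N"
  proof
    fix z assume "z \<in> fmap d ` ball2 c N"
    then obtain x where x: "x \<in> ball2 c N" "z = fmap d x" by blast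
    have px: "padic2 x" and xN: "x N = c mod 2^N" using x unfolding ball_mem by auto
    have "x N mod 2^N = c mod 2^N" using xN by simp
    then have "((x N)^2 + x N - d N) mod 2^N = x N mod 2^N" by (rule FIX[OF d Q]) simp
    then have "fmap d x N = c mod 2^N" using xN by (simp add: fmap_n)
    then show "z \<in> ball2 c N" unfolding ball_mem x(2) using padic_fmap[OF d px] by simp
  qed
next
  show "\<forall>x\<in>ball2 c N. orbit_dense (fmap d) x (ball2 c N)" unfolding orbit_dense_def
  proof (intro ballI allI)
    fix x y n assume x: "x \<in> ball2 c N" and y: "y \<in> ball2 c N"
    have px: "padic2 x" and xN: "x N = c mod 2^N" using x unfolding ball_mem by auto
    have py: "padic2 y" and yN: "y N = c mod 2^N" using y unfolding ball_mem by auto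
    have yn: "y n mod 2^n = y n" using padic_range[OF py, of n] by simp
    have "\<exists>j. (fn d n ^^ j) (x n) = y n"
    proof (cases "n \<le> N")
      case True
      have "x n = x N mod 2^n" "y n = y N mod 2^n" using padic_coh px py True by auto
      then show ?thesis using xN yN by (intro exI[of _ 0]) simp
    next
      case False
      have C: "Cn (d n) c N N" by (rule Qk_Cn[OF d Q]) (use False in simp)
      have xc: "x n mod 2^N = c mod 2^N" using padic_coh[OF px, of N n] False xN by simp
      have yc: "y n mod 2^N = c mod 2^N" using padic_coh[OF py, of N n] False yN by simp
      obtain j where j: "(gD (d n) ^^ j) (x n) mod 2^(N + (n - N)) = y n mod 2^(N + (n-N))"
        using Tk[OF C _ order.refl N2 ec xc yc] xc yc N2 by force
      have "(fn d n ^^ j) (x n) = (gD (d n) ^^ j) (x n) mod 2^n"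
        by (rule fn_iter) (use padic_range[OF px, of n] in auto)
      then show ?thesis using j False yn by (intro exI[of _ j]) simp
    qed
    then obtain j where "(fn d n ^^ j) (x n) = y n" by blast
    then show "\<exists>j. (fmap d ^^ j) x \<in> ball2 (y n) n"
      using fmap_iter[OF d px, of j n] yn unfolding ball_mem by (intro exI[of _ j]) simp
  qed
qed


lemma cycD: assumes "cycle_at d m C"
  shows "C \<subseteq> {0..<2^m}" "C \<noteq> {}" "\<And>c. c \<in> C \<Longrightarrow> C = range (\<lambda>j. (fn d m ^^ j) c)"
  using assms unfolding cycle_at_def by blast+

lemma L1: assumes d: "padic2 d" and ea: "even a" and n1: "1 \<le> n" and nN: "n \<le> N" and N2: "2 \<le> N"
    and Q: "Qk d a n N"
  shows "typeI d a n (N - n)"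
  unfolding typeI_def split_then_grow_def
proof (intro conjI allI impI)
  have "(a mod 2^n) mod 2^n = a mod 2^n" by simp
  then have "((a mod 2^n)^2 + a mod 2^n - d n) mod 2^n = (a mod 2^n) mod 2^n" by (rule FIX[OF d Q _ nN])
  then show "fn d n (a mod 2 ^ n) = a mod 2 ^ n" by (simp add: fn_def)
next
  fix m C assume h: "n \<le> m \<and> m < n + (N - n) \<and> cycle_at d m C \<and> (\<forall>y\<in>C. y mod 2 ^ n \<in> {a mod 2 ^ n})"
  then have nm: "n \<le> m" and mN: "m < N" and cyc: "cycle_at d m C" and ab: "\<forall>y\<in>C. y mod 2 ^ n = a mod 2 ^ n"
    using nN by auto
  from cycD(2)[OF cyc] obtain b where bC: "b \<in> C" by blast
  have br: "0 \<le> b" "b < 2^m" using cycD(1)[OF cyc] bC by auto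
  have ba: "b mod 2^n = a mod 2^n" using ab bC by auto
  have "(b^2 + b - d m) mod 2^m = b mod 2^m" by (rule FIX[OF d Q ba]) (use mN in simp)
  then have bfix: "fn d m b = b" using br by (simp add: fn_def)
  have r1: "range (\<lambda>j. (fn d m ^^ j) b) = {b}" using funpow_fix[of "fn d m" b, OF bfix] by auto
  have "C = range (\<lambda>j. (fn d m ^^ j) b)" by (rule cycD(3)[OF cyc bC])
  then have Cb: "C = {b}" using r1 by simp
  have "(b^2 + b - d (Suc m)) mod 2^Suc m = b mod 2^Suc m" by (rule FIX[OF d Q ba]) (use mN in simp)
  then have f1: "fn d (Suc m) b = b" using br by (simp add: fn_def)
  have "(2::int)^n dvd 2^m" by (rule dvd_pow2[OF nm])
  then have "(b + 2^m) mod 2^n = b mod 2^n" by (simp add: mod_eq_dvd_iff)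
  then have ba2: "(b + 2^m) mod 2^n = a mod 2^n" using ba by simp
  have "((b+2^m)^2 + (b+2^m) - d (Suc m)) mod 2^Suc m = (b+2^m) mod 2^Suc m" by (rule FIX[OF d Q ba2]) (use mN in simp)
  then have f2: "fn d (Suc m) (b+2^m) = b + 2^m" using br by (simp add: fn_def)
  show "splits d m C" unfolding splits_def Cb
  proof (intro exI conjI)
    show "cycle_at d (Suc m) {b}" by (rule cyc1[OF br(1) _ f1]) (use br in simp)
    show "cycle_at d (Suc m) {b + 2^m}" by (rule cyc1[OF _ _ f2]) (use br in simp_all)
    show "{b} \<inter> {b + 2^m} = {}" by simp
    show "{b} \<union> {b + 2^m} = lifts m {b}" using lifts1[OF br] by auto
  qed simp_all
next
  fix m C assume h: "n + (N - n) \<le> m \<and> cycle_at d m C \<and> (\<forall>y\<in>C. y mod 2 ^ n \<in> {a mod 2 ^ n})"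
  then have Nm: "N \<le> m" and cyc: "cycle_at d m C" and ab: "\<forall>y\<in>C. y mod 2 ^ n = a mod 2 ^ n"
    using nN by auto
  define M where "M = Suc m"
  define D where "D = d M"
  have C: "Cn D a n N" unfolding D_def by (rule Qk_Cn[OF d Q]) (use Nm M_def in simp)
  have Dm: "D mod 2^m = d m mod 2^m" unfolding D_def M_def using padic_coh[OF d, of m "Suc m"] by simp
  have DM: "D mod 2^M = d M mod 2^M" unfolding D_def by simp
  from cycD(2)[OF cyc] obtain b where bC: "b \<in> C" by blast
  have Csub: "C \<subseteq> {0..<2^m}" by (rule cycD(1)[OF cyc])
  have Corb: "\<And>c. c \<in> C \<Longrightarrow> C = range (\<lambda>j. (fn d m ^^ j) c)" by (rule cycD(3)[OF cyc])
  have liftsD: "\<And>w. w \<in> lifts m C \<longleftrightarrow> 0 \<le> w \<and> w < 2^M \<and> w mod 2^m \<in> C" unfolding lifts_def M_def by auto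
  have lift_a: "\<And>w. w \<in> lifts m C \<Longrightarrow> w mod 2^n = a mod 2^n"
  proof -
    fix w assume "w \<in> lifts m C"
    then have "w mod 2^m \<in> C" using liftsD by auto
    then have "(w mod 2^m) mod 2^n = a mod 2^n" using ab by auto
    then show "w mod 2^n = a mod 2^n" using mod_mod_cancel[OF dvd_pow2[of n m]] nN Nm by simp
  qed
  show "grows d m C" unfolding grows_def cycle_at_def M_def[symmetric]
  proof (intro conjI ballI)
    show "lifts m C \<subseteq> {0..<2^M}" unfolding lifts_def M_def by auto
    have "b < 2^m" "0 \<le> b" using bC Csub by auto
    moreover have "(2::int)^m < 2^M" unfolding M_def by simp
    ultimately have "b \<in> lifts m C" unfolding lifts_def M_def using bC by auto
    then show "lifts m C \<noteq> {}" by blast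
  next
    fix a' assume a': "a' \<in> lifts m C"
    have a'r: "0 \<le> a'" "a' < 2^M" "a' mod 2^m \<in> C" using a' unfolding lifts_def M_def by auto
    have a'a: "a' mod 2^n = a mod 2^n" by (rule lift_a[OF a'])
    define a'' where "a'' = a' mod 2^m"
    have "n \<le> m" using nN Nm by simp
    then have "a'' mod 2^n = a' mod 2^n" unfolding a''_def by (rule mod_mod_cancel[OF dvd_pow2])
    then have a''a: "a'' mod 2^n = a mod 2^n" using a'a by simp
    have Ca: "C = range (\<lambda>j. (fn d m ^^ j) a'')" unfolding a''_def by (rule Corb[OF a'r(3)])
    show "lifts m C = range (\<lambda>j. (fn d M ^^ j) a')"
    proof (rule set_eqI, rule iffI)
      fix y assume y: "y \<in> lifts m C"
      have yr: "0 \<le> y" "y < 2^M" "y mod 2^m \<in> C" using y unfolding lifts_def M_def by auto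
      then obtain i where i: "y mod 2^m = (fn d m ^^ i) a''" using Ca by auto
      have "(fn d m ^^ i) a'' = (gD D ^^ i) a'' mod 2^m"
        by (rule fn_iter[where d=d and D=D and m=m, OF _ _ Dm]) (simp_all add: a''_def)
      then have "y mod 2^m = ((gD D ^^ i) a'') mod 2^m" using i by simp
      then have "y mod 2^N = ((gD D ^^ i) a'') mod 2^N" by (rule mod_le[OF Nm])
      also have "\<dots> = a'' mod 2^N" by (rule invj[OF C nN a''a])
      also have "\<dots> = a' mod 2^N" unfolding a''_def by (rule mod_mod_cancel[OF dvd_pow2[OF Nm]])
      finally have yx: "a' mod 2^N = y mod 2^N" by simp
      obtain j where j: "(gD D ^^ j) a' mod 2^(N + (M - N)) = y mod 2^(N + (M - N))"
        using Tk[OF C n1 nN N2 ea a'a lift_a[OF y] yx] by blast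
      have "(fn d M ^^ j) a' = (gD D ^^ j) a' mod 2^M" by (rule fn_iter[where d=d and D=D and m=M, OF a'r(1) a'r(2) DM])
      also have "\<dots> = y" using j Nm yr unfolding M_def by simp
      finally show "y \<in> range (\<lambda>j. (fn d M ^^ j) a')" by (metis rangeI)
    next
      fix y assume "y \<in> range (\<lambda>j. (fn d M ^^ j) a')"
      then obtain j where j: "y = (fn d M ^^ j) a'" by blast
      have yv: "y = (gD D ^^ j) a' mod 2^M" unfolding j by (rule fn_iter[where d=d and D=D and m=M, OF a'r(1) a'r(2) DM])
      have "y mod 2^m = (gD D ^^ j) a' mod 2^m" unfolding yv M_def by (simp add: mod_mod_cancel)
      also have "\<dots> = (gD D ^^ j) a'' mod 2^m" unfolding a''_def by (rule gD_iter_mod[symmetric])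
      also have "\<dots> = (fn d m ^^ j) a''" by (rule fn_iter[where d=d and D=D and m=m, OF _ _ Dm, symmetric]) (simp_all add: a''_def)
      finally have "y mod 2^m \<in> C" using Ca by auto
      moreover have "0 \<le> y" "y < 2^M" unfolding yv by simp_all
      ultimately show "y \<in> lifts m C" using liftsD by auto
    qed
  qed
qed



fun sqr :: "(nat \<Rightarrow> int) \<Rightarrow> nat \<Rightarrow> nat \<Rightarrow> int" where
  "sqr d h 0 = 2^h"
| "sqr d h (Suc j) = (if ((sqr d h j)^2 - d (2*h+j+4)) mod 2^(2*h+j+4) = 0 then sqr d h j
     else sqr d h j + 2^(h+j+2))"

lemma sqr_inv: assumes d: "padic2 d" and d3: "d (2*h+3) = 2^(2*h)"
  shows "sqr d h j mod 2^(h+1) = 2^h \<and> ((sqr d h j)^2 - d (2*h+j+3)) mod 2^(2*h+j+3) = 0"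
proof (induction j)
  case 0
  have "(2::int)^h mod 2^(h+1) = 2^h" by simp
  moreover have "((2::int)^h)^2 = 2^(2*h)" by (subst mult.commute) (rule power_mult[symmetric])
  ultimately show ?case using d3 by simp
next
  case (Suc j)
  define r where "r = sqr d h j"
  define K where "K = 2*h+j+3"
  have r1: "r mod 2^(h+1) = 2^h" and r2: "(r^2 - d K) mod 2^K = 0" using Suc unfolding r_def K_def by auto
  define P where "P = (2::int)^h"
  define Q where "Q = (2::int)^j"
  have sqP: "(2::int)^(2*h) = P * P" unfolding P_def by (metis mult_2 power_add)
  have PK: "(2::int)^K = 8*P*P*Q" unfolding K_def power_add sqP Q_def by simp
  have PK1: "(2::int)^(2*h + Suc j + 3) = 16*P*P*Q"
  proof -
    have "2*h + Suc j + 3 = 2*h + j + 4" by simp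
    then show ?thesis unfolding power_add sqP Q_def by simp
  qed
  have K1: "2*h + Suc j + 3 = Suc K" "2*h+j+4 = Suc K" unfolding K_def by simp_all
  have dK: "d K = d (Suc K) mod 2^K" by (rule padic_coh[OF d]) simp
  define X where "X = r^2 - d (Suc K)"
  have "X mod 2^K = (r^2 - d K) mod 2^K" unfolding X_def by (rule mod_diff_cong) (simp_all add: dK)
  then have "2^K dvd X" using r2 by (simp add: mod_eq_0_iff_dvd)
  then obtain t where t: "X = 8*P*P*Q*t" unfolding PK by (rule dvdE)
  obtain q where q: "r = P * (2*q + 1)"
  proof -
    define q0 where "q0 = r div 2^(h+1)"
    have "r div 2^(h+1) * 2^(h+1) + 2^h = r" using div_mult_mod_eq[of r "2^(h+1)"] unfolding r1 .
    then have e: "r = q0 * 2^(h+1) + 2^h" unfolding q0_def by (rule sym)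
    have "r = P * (2 * q0 + 1)" unfolding P_def using e by (simp add: algebra_simps)
    then show ?thesis using that by blast
  qed
  have r3: "r mod 2^(h+1) = 2^h" by (rule r1)
  have PQ: "(2::int)^(h+j+2) = 4*P*Q" unfolding P_def Q_def power_add by simp
  have sq2: "sqr d h (Suc j) = (if X mod 2^(Suc K) = 0 then r else r + 4*P*Q)"
    unfolding sqr.simps(2) K1(2) X_def r_def PQ ..
  show ?case
  proof (cases "X mod 2^(Suc K) = 0")
    case True
    then have "sqr d h (Suc j) = r" unfolding sq2 by simp
    then show ?thesis using r1 True unfolding X_def K1 by simp
  next
    case False
    then have eq: "sqr d h (Suc j) = r + 4*P*Q" unfolding sq2 by simp
    have "odd t"
    proof
      assume "even t"
      then obtain t' where "t = 2*t'" by (rule evenE)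
      then have "X = 2^(Suc K) * t'" using t PK by (simp add: algebra_simps)
      then show False using False by simp
    qed
    then have "even (t + 2*q + 1)" by simp
    then obtain u where u: "t + 2*q + 1 = 2*u" by (rule evenE)
    have "(r + 4*P*Q)^2 - d (Suc K) = X + 8*P*Q*r + 16*P*P*Q*Q" unfolding X_def by (simp add: power2_eq_square algebra_simps)
    also have "\<dots> = 8*P*P*Q*(t + 2*q + 1) + 16*P*P*Q*Q" unfolding t q by (simp add: algebra_simps)
    also have "\<dots> = (16*P*P*Q) * (u + Q)" unfolding u by (simp add: algebra_simps)
    finally have A: "((r + 4*P*Q)^2 - d (Suc K)) mod (16*P*P*Q) = 0" by simp
    have dv: "(2::int)^(h+1) dvd (4*P*Q)" unfolding PQ[symmetric] by (rule dvd_pow2) simp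
    have B: "(r + 4*P*Q) mod 2^(h+1) = r mod 2^(h+1)" using dv by (simp add: mod_eq_dvd_iff)
    have PK2: "(2::int)^(Suc K) = 16*P*P*Q" using PK by simp
    show ?thesis unfolding eq K1(1) PK2 using A B r1 by simp
  qed
qed

lemma sqr_step: assumes d: "padic2 d" and d3: "d (2*h+3) = 2^(2*h)"
  shows "sqr d h (Suc n) mod 2^n = sqr d h n mod 2^n"
proof -
  have "(2::int)^n dvd 2^(h+n+2)" by (rule dvd_pow2) simp
  then show ?thesis by (auto simp: mod_eq_dvd_iff)
qed

lemma sqrt_exists: assumes d: "padic2 d" and d3: "d (2*h+3) = 2^(2*h)"
  shows "\<exists>y. padic2 y \<and> z2_mult y y = d"
proof (intro exI conjI)
  define y where "y = (\<lambda>n. sqr d h n mod 2^n)"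
  show "padic2 y"
  proof (rule padic2I)
    fix n
    show "0 \<le> y n" "y n < 2^n" unfolding y_def by simp_all
    show "y n = y (Suc n) mod 2^n" unfolding y_def using sqr_step[OF d d3, of n]
      by (simp add: mod_mod_cancel)
  qed
  show "z2_mult y y = d"
  proof
    fix n
    have "((sqr d h n)^2 - d (2*h+n+3)) mod 2^(2*h+n+3) = 0" using sqr_inv[OF d d3] by blast
    then have "2^(2*h+n+3) dvd ((sqr d h n)^2 - d (2*h+n+3))" by (simp add: mod_eq_0_iff_dvd)
    then have "(2::int)^n dvd ((sqr d h n)^2 - d (2*h+n+3))" by (rule dvd_trans[rotated]) (rule dvd_pow2, simp)
    then have A: "(sqr d h n)^2 mod 2^n = d (2*h+n+3) mod 2^n" by (simp add: mod_eq_dvd_iff)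
    have B: "d n = d (2*h+n+3) mod 2^n" by (rule padic_coh[OF d]) simp
    have "z2_mult y y n = (sqr d h n)^2 mod 2^n" unfolding z2_mult_def y_def
      by (simp add: power2_eq_square mod_mult_left_eq mod_mult_right_eq)
    then show "z2_mult y y n = d n" using A B by simp
  qed
qed



lemma NEXT: assumes "padic2 x" shows "x (Suc n) = x n \<or> x (Suc n) = x n + 2^n"
proof -
  have r: "0 \<le> x n" "x n < 2^n" using padic_range[OF assms] by auto
  have "x (Suc n) \<in> lifts n {x n}" unfolding lifts_def
    using padic_range[OF assms, of "Suc n"] padic_step[OF assms, of n] by auto
  then show ?thesis unfolding lifts1[OF r] by auto
qed

lemma DIG: assumes x: "padic2 x" and x1: "x 1 = 0" and M: "1 \<le> M"
  shows "x M = 0 \<or> (\<exists>n. 2 \<le> n \<and> n \<le> M \<and> x n = 2^(n-1))"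
  using M
proof (induction M rule: dec_induct)
  case base then show ?case using x1 by simp
next
  case (step M)
  show ?case
  proof (cases "x M = 0")
    case True
    then have "x (Suc M) = 0 \<or> x (Suc M) = 2^M" using NEXT[OF x, of M] by simp
    then show ?thesis using step(1) by (metis diff_Suc_1 le_refl Suc_le_mono one_add_one plus_1_eq_Suc)
  next
    case False
    then show ?thesis using step(3) by (meson le_SucI)
  qed
qed

lemma vfacts: assumes x0: "x 0 = 0" and xn: "x n \<noteq> 0"
  shows "x (Suc (v2 x)) \<noteq> 0 \<and> (\<forall>i \<le> v2 x. x i = 0)"
proof -
  obtain n' where n': "n = Suc n'" using xn x0 by (cases n) auto
  have ex: "\<exists>m. x (Suc m) \<noteq> 0" using xn n' by blast
  have A: "x (Suc (v2 x)) \<noteq> 0" unfolding v2_def by (rule LeastI_ex[OF ex])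
  have B: "\<forall>i \<le> v2 x. x i = 0"
  proof (intro allI impI)
    fix i assume i: "i \<le> v2 x"
    show "x i = 0"
    proof (cases i)
      case 0 then show ?thesis using x0 by simp
    next
      case (Suc i')
      then have "i' < v2 x" using i by simp
      then have "\<not> x (Suc i') \<noteq> 0" unfolding v2_def by (rule not_less_Least)
      then show ?thesis using Suc by simp
    qed
  qed
  show ?thesis using A B by blast
qed

lemma pow_step: assumes "0 \<le> (X::int)" "X < 2^Suc w" "X mod 2^w = 0" "X \<noteq> 0" shows "X = 2^w"
proof -
  have "X \<in> lifts w {0}" unfolding lifts_def using assms by auto
  then show ?thesis unfolding lifts1[of 0 w, simplified] using assms(4) by auto
qed

lemma QSUB: assumes x: "padic2 x" and Q: "Qk d a n N" and xn: "x n = a mod 2^n" and nN: "n \<le> N"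
  shows "Qk d (x N) N N"
  unfolding Qk_def Cn_def
proof (intro allI impI)
  fix y :: int assume y: "y mod 2^N = x N mod 2^N"
  have "y mod 2^n = x N mod 2^n" by (rule mod_le[OF nN y])
  also have "\<dots> = x n" using padic_coh[OF x nN] by simp
  finally have "y mod 2^n = a mod 2^n" using xn by simp
  then show "(y\<^sup>2 - d (Suc N)) mod 2 ^ Suc N = 2 ^ N" using Q unfolding Qk_def Cn_def by blast
qed

lemma QSUB2: assumes Q: "Qk d a n N" and nM: "n \<le> M" and c: "c mod 2^n = a mod 2^n"
  shows "Qk d c M N"
  unfolding Qk_def Cn_def
proof (intro allI impI)
  fix y :: int assume y: "y mod 2^M = c mod 2^M"
  have "y mod 2^n = c mod 2^n" by (rule mod_le[OF nM y])
  then have "y mod 2^n = a mod 2^n" using c by simp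
  then show "(y\<^sup>2 - d (Suc N)) mod 2 ^ Suc N = 2 ^ N" using Q unfolding Qk_def Cn_def by blast
qed

lemma DISJ: assumes "n \<le> m" "(c' mod 2^m) mod 2^n \<noteq> c mod 2^n"
  shows "disjnt (ball2 c n) (ball2 c' m)"
  unfolding disjnt_def
proof (rule ccontr)
  assume "ball2 c n \<inter> ball2 c' m \<noteq> {}"
  then obtain x where x: "padic2 x" "x n = c mod 2^n" "x m = c' mod 2^m" unfolding ball2_def by auto
  have "x n = x m mod 2^n" by (rule padic_coh[OF x(1) assms(1)])
  then show False using x assms(2) by simp
qed

lemma BSUB: assumes "1 \<le> N" "even c" shows "ball2 c N \<subseteq> ball2 0 1"
proof
  fix x assume "x \<in> ball2 c N"
  then have x: "padic2 x" "x N = c mod 2^N" unfolding ball2_def by auto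
  have "x 1 = x N mod 2^1" by (rule padic_coh[OF x(1) assms(1)])
  also have "\<dots> = c mod 2" using x(2) mod_mod_cancel[OF dvd_pow2[OF assms(1)], of c] by simp
  also have "\<dots> = 0" using assms(2) by simp
  finally show "x \<in> ball2 0 1" unfolding ball2_def using x by simp
qed

lemma pw_mod0: "n \<le> k \<Longrightarrow> (2::int)^k mod 2^n = 0"
  using dvd_pow2 by (simp add: mod_eq_0_iff_dvd)

lemma pw_modn: assumes "1 \<le> n" shows "(2::int)^(n-1) mod 2^n = 2^(n-1)"
proof -
  obtain k where k: "n = Suc k" using assms by (cases n) auto
  show ?thesis unfolding k by simp
qed

lemma DISJpow: assumes "2 \<le> n" "n < m"
  shows "disjnt (ball2 (2^(n-1)) n) (ball2 (2^(m-1)) m)"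
proof (rule DISJ)
  show "n \<le> m" using assms by simp
  have "((2::int)^(m-1) mod 2^m) mod 2^n = 2^(m-1) mod 2^n" using pw_modn[of m] assms by simp
  also have "\<dots> = 0" by (rule pw_mod0) (use assms in simp)
  finally show "((2::int)^(m-1) mod 2^m) mod 2^n \<noteq> 2^(n-1) mod 2^n" using pw_modn[of n] assms by simp
qed

lemma DISJ0: assumes "1 \<le> n" "n \<le> m"
  shows "disjnt (ball2 (2^(n-1)) n) (ball2 0 m)"
  by (rule DISJ) (use assms pw_modn[of n] in simp_all)



lemma QE1: assumes p: "1 \<le> p" and d0: "d (2*p+1) = 0"
  shows "Qk d (2^p) (p+1) (2*p)"
  unfolding Qk_def Cn_def
proof (intro allI impI)
  fix y :: int assume y: "y mod 2^(p+1) = 2^p mod 2^(p+1)"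
  define P where "P = (2::int)^p"
  have P2: "(2::int)^(p+1) = 2*P" unfolding P_def by simp
  have PP: "(2::int)^(2*p) = P*P" unfolding P_def by (metis mult_2 power_add)
  have PP1: "(2::int)^(Suc (2*p)) = 2*(P*P)" using PP by simp
  have Pp: "P > 0" unfolding P_def by simp
  have ym: "y mod (2*P) = P" using y unfolding P2 P_def by simp
  define q where "q = y div (2*P)"
  have "y div (2*P) * (2*P) + P = y" using div_mult_mod_eq[of y "2*P"] unfolding ym .
  then have yq: "y = P * (2*q+1)" unfolding q_def by (simp add: algebra_simps)
  have "y^2 - d (Suc (2*p)) - P*P = (2*(P*P)) * (2*q*q + 2*q)"
    using d0 unfolding yq by (simp add: power2_eq_square algebra_simps)
  then have "(2*(P*P)) dvd (y^2 - d (Suc (2*p)) - P*P)" by (rule dvdI)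
  moreover have "0 \<le> P*P" "P*P < 2*(P*P)" using Pp by simp_all
  ultimately have "(y^2 - d (Suc (2*p))) mod (2*(P*P)) = P*P" by (rule mod_eqI)
  then show "(y\<^sup>2 - d (Suc (2 * p))) mod 2 ^ Suc (2 * p) = 2 ^ (2 * p)" unfolding PP1 PP .
qed

lemma QE2: assumes dv: "d (Suc v) = 2^v" and vn: "v + 1 \<le> 2*n0"
  shows "Qk d 0 n0 v"
  unfolding Qk_def Cn_def
proof (intro allI impI)
  fix y :: int assume y: "y mod 2^n0 = 0 mod 2^n0"
  then have "2^n0 dvd y" by (simp add: mod_eq_0_iff_dvd)
  then obtain q where q: "y = 2^n0 * q" by (rule dvdE)
  have "y^2 = 2^(2*n0) * q^2" unfolding q by (simp add: power_mult_distrib power_mult mult.commute)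
  moreover have "(2::int)^(Suc v) dvd 2^(2*n0)" by (rule dvd_pow2) (use vn in simp)
  ultimately have A: "2^(Suc v) dvd y^2" by simp
  have "y^2 - d (Suc v) - 2^v = y^2 - 2^(Suc v)" using dv by simp
  then have "2^(Suc v) dvd (y^2 - d (Suc v) - 2^v)" using A by simp
  then show "(y\<^sup>2 - d (Suc v)) mod 2 ^ Suc v = 2 ^ v" by (rule mod_eqI) simp_all
qed

lemma QE3: assumes vh: "v = 2*h" and h1: "1 \<le> h" and w1: "Suc v \<le> w" and w2: "w \<le> v+2"
    and dw: "(d (Suc w) - 2^v) mod 2^(Suc w) = 2^w"
  shows "Qk d (2^h) (h+1) w"
  unfolding Qk_def Cn_def
proof (intro allI impI)
  fix y :: int assume y: "y mod 2^(h+1) = 2^h mod 2^(h+1)"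
  define P where "P = (2::int)^h"
  have P2: "(2::int)^(h+1) = 2*P" unfolding P_def by simp
  have PP: "(2::int)^v = P*P" unfolding P_def vh by (metis mult_2 power_add)
  have ym: "y mod (2*P) = P" using y unfolding P2 P_def by simp
  define q where "q = y div (2*P)"
  have "y div (2*P) * (2*P) + P = y" using div_mult_mod_eq[of y "2*P"] unfolding ym .
  then have yq: "y = P * (2*q+1)" unfolding q_def by (simp add: algebra_simps)
  have "even (q*q + q)" by simp
  then obtain s where s: "q*q + q = 2*s" by (rule evenE)
  have ysq: "y^2 = P*P + (8*(P*P)) * s"
  proof -
    have "y^2 = P*P + 4*(P*P)*(q*q+q)" unfolding yq by (simp add: power2_eq_square algebra_simps)
    then show ?thesis unfolding s by (simp add: algebra_simps)
  qed
  have "(2::int)^(Suc w) dvd 2^(v+3)" by (rule dvd_pow2) (use w2 in simp)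
  moreover have "(2::int)^(v+3) = 8*(P*P)" using PP by (simp add: power_add)
  ultimately have A: "2^(Suc w) dvd (8*(P*P)) * s" by simp
  have B: "2^(Suc w) dvd (d (Suc w) - 2^v - 2^w)" by (rule mod_to_dvd[OF dw]) simp_all
  have C: "(2::int)^(Suc w) dvd 2^(Suc w)" by simp
  have E: "y^2 - d (Suc w) - 2^w = (8*(P*P)) * s - (d (Suc w) - 2^v - 2^w) - 2^(Suc w)"
    using ysq PP by (simp add: algebra_simps)
  have "2^(Suc w) dvd (y^2 - d (Suc w) - 2^w)" unfolding E by (intro dvd_diff A B C)
  then show "(y\<^sup>2 - d (Suc w)) mod 2 ^ Suc w = 2 ^ w" by (rule mod_eqI) simp_all
qed

lemma EXIST: assumes d: "padic2 d" and cov: "\<forall>x\<in>ball2 0 1. \<exists>N. 2 \<le> N \<and> N \<le> B \<and> Qk d (x N) N N"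
  shows "\<exists>\<E>. finite \<E> \<and> (\<forall>E\<in>\<E>. minimal_component d E) \<and> pairwise disjnt \<E> \<and> \<Union>\<E> = ball2 0 1"
proof -
  define lev where "lev x = (LEAST N. 2 \<le> N \<and> Qk d (x N) N N)" for x :: "nat \<Rightarrow> int"
  define bl where "bl x = ball2 (x (lev x)) (lev x)" for x
  have levP: "2 \<le> lev x \<and> lev x \<le> B \<and> Qk d (x (lev x)) (lev x) (lev x)" if x: "x \<in> ball2 0 1" for x
  proof -
    obtain N where N: "2 \<le> N" "N \<le> B" "Qk d (x N) N N" using cov x by blast
    have "2 \<le> lev x \<and> Qk d (x (lev x)) (lev x) (lev x)" unfolding lev_def
      by (rule LeastI[of _ N]) (use N in simp)
    moreover have "lev x \<le> N" unfolding lev_def by (rule Least_le) (use N in simp)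
    ultimately show ?thesis using N by simp
  qed
  have levmin: "lev x \<le> N" if "2 \<le> N" "Qk d (x N) N N" for x N
    unfolding lev_def by (rule Least_le) (use that in simp)
  have xb: "padic2 x \<and> x 1 = 0" if "x \<in> ball2 0 1" for x using that unfolding ball2_def by simp
  have ev: "even (x (lev x))" if x: "x \<in> ball2 0 1" for x
  proof -
    have "x 1 = x (lev x) mod 2^1" by (rule padic_coh) (use xb[OF x] levP[OF x] in simp_all)
    then show ?thesis using xb[OF x] by (simp add: even_iff_mod_2_eq_zero)
  qed
  have xin: "x \<in> bl x" if x: "x \<in> ball2 0 1" for x
    unfolding bl_def ball_mem using xb[OF x] padic_range[of x "lev x"] by simp
  have same: "bl x = bl x'" if x: "x \<in> ball2 0 1" and x': "x' \<in> ball2 0 1" and le: "lev x \<le> lev x'"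
    and ne: "bl x \<inter> bl x' \<noteq> {}" for x x'
  proof -
    define N where "N = lev x"
    define N' where "N' = lev x'"
    obtain z where z: "z \<in> bl x" "z \<in> bl x'" using ne by blast
    have pz: "padic2 z" and zN: "z N = x N mod 2^N" and zN': "z N' = x' N' mod 2^N'"
      using z unfolding bl_def ball_mem N_def N'_def by auto
    have xN: "x N mod 2^N = x N" using padic_range[of x N] xb[OF x] by simp
    have x'N': "x' N' mod 2^N' = x' N'" using padic_range[of x' N'] xb[OF x'] by simp
    have NN: "N \<le> N'" using le unfolding N_def N'_def .
    have "x' N = x' N' mod 2^N" by (rule padic_coh) (use xb[OF x'] NN in simp_all)
    also have "\<dots> = z N' mod 2^N" using zN' x'N' by simp
    also have "\<dots> = z N" using padic_coh[OF pz NN] by simp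
    also have "\<dots> = x N" using zN xN by simp
    finally have eqx: "x' N = x N" .
    have "Qk d (x' N) N N" using levP[OF x] eqx unfolding N_def by simp
    then have "N' \<le> N" unfolding N'_def by (rule levmin[rotated]) (use levP[OF x] N_def in simp)
    then have "N' = N" using NN by simp
    then show ?thesis unfolding bl_def using eqx N_def N'_def by simp
  qed
  define \<E> where "\<E> = bl ` ball2 0 1"
  show ?thesis
  proof (intro exI conjI)
    have "\<E> \<subseteq> (\<lambda>(c,N). ball2 c N) ` ({0..<2^B} \<times> {..B})"
    proof
      fix E assume "E \<in> \<E>"
      then obtain x where x: "x \<in> ball2 0 1" "E = bl x" unfolding \<E>_def by blast
      have r: "0 \<le> x (lev x)" "x (lev x) < 2^(lev x)" using padic_range[of x "lev x"] xb[OF x(1)] by auto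
      have "(2::int)^(lev x) \<le> 2^B" using levP[OF x(1)] by (simp add: power_increasing)
      then have "x (lev x) < 2^B" using r(2) by linarith
      then have "(x (lev x), lev x) \<in> {0..<2^B} \<times> {..B}" using r levP[OF x(1)] by auto
      then show "E \<in> (\<lambda>(c,N). ball2 c N) ` ({0..<2^B} \<times> {..B})" unfolding x(2) bl_def by force
    qed
    then show "finite \<E>" by (rule finite_subset) simp
  next
    show "\<forall>E\<in>\<E>. minimal_component d E"
    proof
      fix E assume "E \<in> \<E>"
      then obtain x where x: "x \<in> ball2 0 1" "E = bl x" unfolding \<E>_def by blast
      have l: "2 \<le> lev x" "Qk d (x (lev x)) (lev x) (lev x)" using levP[OF x(1)] by auto
      show "minimal_component d E" unfolding x(2) bl_def by (rule L2[OF d ev[OF x(1)] l])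
    qed
  next
    show "pairwise disjnt \<E>" unfolding pairwise_def \<E>_def
    proof (intro ballI impI)
      fix A B assume A: "A \<in> bl ` ball2 0 1" and B: "B \<in> bl ` ball2 0 1" and AB: "A \<noteq> B"
      then obtain x x' where x: "x \<in> ball2 0 1" "A = bl x" and x': "x' \<in> ball2 0 1" "B = bl x'" by blast
      show "disjnt A B"
      proof (rule ccontr)
        assume "\<not> disjnt A B"
        then have ne: "A \<inter> B \<noteq> {}" unfolding disjnt_def by simp
        show False
        proof (cases "lev x \<le> lev x'")
          case True
          have "bl x \<inter> bl x' \<noteq> {}" using ne x(2) x'(2) by simp
          then have "bl x = bl x'" by (rule same[OF x(1) x'(1) True])
          then show False using AB x(2) x'(2) by simp
        next
          case False then have le: "lev x' \<le> lev x" by simp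
          have "bl x' \<inter> bl x \<noteq> {}" using ne x(2) x'(2) by blast
          then have "bl x' = bl x" by (rule same[OF x'(1) x(1) le])
          then show False using AB x(2) x'(2) by simp
        qed
      qed
    qed
  next
    show "\<Union>\<E> = ball2 0 1"
    proof
      show "\<Union>\<E> \<subseteq> ball2 0 1"
      proof
        fix z assume "z \<in> \<Union>\<E>"
        then obtain x where x: "x \<in> ball2 0 1" "z \<in> bl x" unfolding \<E>_def by blast
        have "1 \<le> lev x" using levP[OF x(1)] by simp
        then have "bl x \<subseteq> ball2 0 1" unfolding bl_def by (rule BSUB[OF _ ev[OF x(1)]])
        then show "z \<in> ball2 0 1" using x(2) by blast
      qed
      show "ball2 0 1 \<subseteq> \<Union>\<E>" unfolding \<E>_def using xin by blast
    qed
  qed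
qed



lemma QE1n: assumes n2: "2 \<le> n" and dz: "\<forall>i\<le>v. d i = 0" and nv: "2*n - 1 \<le> v"
  shows "Qk d (2^(n-1)) n (2*n-2)"
proof -
  define p where "p = n - 1"
  have p: "n = p + 1" "1 \<le> p" using n2 unfolding p_def by simp_all
  have "d (2*p+1) = 0" using dz nv p by simp
  then have "Qk d (2^p) (p+1) (2*p)" by (rule QE1[OF p(2)])
  moreover have "2*n-2 = 2*p" "n - 1 = p" using p by simp_all
  ultimately show ?thesis using p by simp
qed

lemma T1: assumes d: "padic2 d" and n2: "2 \<le> n" and dz: "\<forall>i\<le>v. d i = 0" and nv: "2*n - 1 \<le> v"
  shows "typeI d (2^(n-1)) n (n-2)"
proof -
  have ev: "even ((2::int)^(n-1))" using n2 by simp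
  have "typeI d (2^(n-1)) n (2*n-2 - n)"
    apply (rule L1[OF d ev _ _ _ QE1n[OF n2 dz nv]])
    using n2 apply linarith
    using n2 apply linarith
    using n2 apply linarith
    done
  moreover have "2*n-2-n = n-2" by simp
  ultimately show ?thesis by simp
qed

lemma ball_pow: "1 \<le> n \<Longrightarrow> padic2 x \<Longrightarrow> x n = 2^(n-1) \<Longrightarrow> x \<in> ball2 (2^(n-1)) n"
  unfolding ball_mem using pw_modn by simp

lemma ball_zero: "padic2 x \<Longrightarrow> x n = 0 \<Longrightarrow> x \<in> ball2 0 n"
  unfolding ball_mem by simp

lemma ODD: assumes d: "padic2 d" and vh: "v = 2*h+1" and h1: "1 \<le> h" and dz: "\<forall>i\<le>v. d i = 0"
    and dv: "d (Suc v) = 2^v" and n0: "n0 = h+1"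
  shows "ball2 0 1 = (\<Union>n\<in>{2..n0}. ball2 (2 ^ (n - 1)) n) \<union> ball2 0 n0
        \<and> (\<forall>n\<in>{2..n0}. \<forall>m\<in>{2..n0}. n \<noteq> m \<longrightarrow> disjnt (ball2 (2 ^ (n - 1)) n) (ball2 (2 ^ (m - 1)) m))
        \<and> (\<forall>n\<in>{2..n0}. disjnt (ball2 (2 ^ (n - 1)) n) (ball2 0 n0))
        \<and> (\<forall>n\<in>{2..n0}. typeI d (2 ^ (n - 1)) n (n - 2))
        \<and> typeI d 0 n0 (n0 - 1)
        \<and> (\<forall>x\<in>ball2 0 1. \<exists>N. 2 \<le> N \<and> N \<le> v+2 \<and> Qk d (x N) N N)"
proof (intro conjI)
  have Q0: "Qk d 0 n0 v" by (rule QE2[where d=d and v=v, OF dv]) (use vh n0 in simp)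
  show "ball2 0 1 = (\<Union>n\<in>{2..n0}. ball2 (2 ^ (n - 1)) n) \<union> ball2 0 n0"
  proof
    show "ball2 0 1 \<subseteq> (\<Union>n\<in>{2..n0}. ball2 (2 ^ (n - 1)) n) \<union> ball2 0 n0"
    proof
      fix x assume x: "x \<in> ball2 0 1"
      then have px: "padic2 x" "x 1 = 0" unfolding ball_mem by auto
      have "x n0 = 0 \<or> (\<exists>n. 2 \<le> n \<and> n \<le> n0 \<and> x n = 2^(n-1))" by (rule DIG[OF px]) (use n0 in simp)
      then show "x \<in> (\<Union>n\<in>{2..n0}. ball2 (2 ^ (n - 1)) n) \<union> ball2 0 n0"
      proof
        assume "x n0 = 0"
        then show ?thesis using ball_zero[OF px(1)] by blast
      next
        assume "\<exists>n. 2 \<le> n \<and> n \<le> n0 \<and> x n = 2^(n-1)"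
        then obtain n where n: "2 \<le> n" "n \<le> n0" "x n = 2^(n-1)" by blast
        have "x \<in> ball2 (2 ^ (n - 1)) n" by (rule ball_pow[OF _ px(1) n(3)]) (use n in simp)
        moreover have "n \<in> {2..n0}" using n by simp
        ultimately show ?thesis by (intro UnI1 UN_I)
      qed
    qed
    have s1: "ball2 0 n0 \<subseteq> ball2 0 1" by (rule BSUB) (use n0 in simp_all)
    have s2: "ball2 (2 ^ (n - 1)) n \<subseteq> ball2 0 1" if "n \<in> {2..n0}" for n
      by (rule BSUB) (use that in simp_all)
    show "(\<Union>n\<in>{2..n0}. ball2 (2 ^ (n - 1)) n) \<union> ball2 0 n0 \<subseteq> ball2 0 1"
      using s1 s2 by blast
  qed
  show "\<forall>n\<in>{2..n0}. \<forall>m\<in>{2..n0}. n \<noteq> m \<longrightarrow> disjnt (ball2 (2 ^ (n - 1)) n) (ball2 (2 ^ (m - 1)) m)"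
  proof (intro ballI impI)
    fix n m assume n: "n \<in> {2..n0}" and m: "m \<in> {2..n0}" and nm: "n \<noteq> m"
    show "disjnt (ball2 (2 ^ (n - 1)) n) (ball2 (2 ^ (m - 1)) m)"
    proof (cases "n < m")
      case True then show ?thesis using DISJpow n by simp
    next
      case False then have "m < n" using nm by simp
      then have "disjnt (ball2 (2 ^ (m - 1)) m) (ball2 (2 ^ (n - 1)) n)" using DISJpow[of m n] m by simp
      then show ?thesis by (rule disjnt_sym)
    qed
  qed
  show "\<forall>n\<in>{2..n0}. disjnt (ball2 (2 ^ (n - 1)) n) (ball2 0 n0)"
    using DISJ0 by simp
  show "\<forall>n\<in>{2..n0}. typeI d (2 ^ (n - 1)) n (n - 2)"
  proof
    fix n assume n: "n \<in> {2..n0}"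
    show "typeI d (2 ^ (n - 1)) n (n - 2)" by (rule T1[OF d _ dz]) (use n n0 vh in auto)
  qed
  have "typeI d 0 n0 (v - n0)" by (rule L1[OF d _ _ _ _ Q0]) (use n0 vh h1 in simp_all)
  moreover have "v - n0 = n0 - 1" using vh n0 by simp
  ultimately show "typeI d 0 n0 (n0 - 1)" by simp
  show "\<forall>x\<in>ball2 0 1. \<exists>N. 2 \<le> N \<and> N \<le> v+2 \<and> Qk d (x N) N N"
  proof
    fix x assume x: "x \<in> ball2 0 1"
    then have px: "padic2 x" "x 1 = 0" unfolding ball_mem by auto
    have "x n0 = 0 \<or> (\<exists>n. 2 \<le> n \<and> n \<le> n0 \<and> x n = 2^(n-1))" by (rule DIG[OF px]) (use n0 in simp)
    then show "\<exists>N. 2 \<le> N \<and> N \<le> v+2 \<and> Qk d (x N) N N"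
    proof
      assume "x n0 = 0"
      then have "Qk d (x v) v v" by (intro QSUB[OF px(1) Q0]) (use n0 vh in simp_all)
      then show ?thesis using vh h1 by (intro exI[of _ v]) simp
    next
      assume "\<exists>n. 2 \<le> n \<and> n \<le> n0 \<and> x n = 2^(n-1)"
      then obtain n where n: "2 \<le> n" "n \<le> n0" "x n = 2^(n-1)" by blast
      have Q: "Qk d (2^(n-1)) n (2*n-2)" by (rule QE1n[OF n(1) dz]) (use n n0 vh in simp)
      have "Qk d (x (2*n-2)) (2*n-2) (2*n-2)"
        by (rule QSUB[OF px(1) Q]) (use n pw_modn[of n] in simp_all)
      moreover have "2 \<le> 2*n-2" "2*n-2 \<le> v+2" using n n0 vh by linarith+
      ultimately show ?thesis by blast
    qed
  qed
qed



lemma EVEN: assumes d: "padic2 d" and vh: "v = 2*h" and h1: "1 \<le> h" and dz: "\<forall>i\<le>v. d i = 0"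
    and dv: "d (Suc v) = 2^v" and n0: "n0 = h+1"
    and w1: "Suc v \<le> w" and w2: "w \<le> v+2" and dw: "(d (Suc w) - 2^v) mod 2^(Suc w) = 2^w"
  shows "ball2 0 1 = (\<Union>n\<in>{2..n0 - 1}. ball2 (2 ^ (n - 1)) n) \<union> ball2 0 n0 \<union> ball2 (2 ^ (n0 - 1)) n0
        \<and> (\<forall>n\<in>{2..n0 - 1}. \<forall>m\<in>{2..n0 - 1}. n \<noteq> m \<longrightarrow> disjnt (ball2 (2 ^ (n - 1)) n) (ball2 (2 ^ (m - 1)) m))
        \<and> (\<forall>n\<in>{2..n0 - 1}. disjnt (ball2 (2 ^ (n - 1)) n) (ball2 0 n0)
                          \<and> disjnt (ball2 (2 ^ (n - 1)) n) (ball2 (2 ^ (n0 - 1)) n0))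
        \<and> disjnt (ball2 0 n0) (ball2 (2 ^ (n0 - 1)) n0)
        \<and> (\<forall>n\<in>{2..n0 - 1}. typeI d (2 ^ (n - 1)) n (n - 2))
        \<and> typeI d 0 n0 (n0 - 2)
        \<and> typeI d (2 ^ (n0 - 1)) n0 (w - n0)
        \<and> (\<forall>x\<in>ball2 0 1. \<exists>N. 2 \<le> N \<and> N \<le> v+2 \<and> Qk d (x N) N N)
        \<and> Qk d 0 n0 v \<and> Qk d (2^h) (h+1) w"
proof -
  have Q0: "Qk d 0 n0 v" by (rule QE2[where d=d and v=v, OF dv]) (use vh n0 in simp)
  have Q3: "Qk d (2^h) (h+1) w" by (rule QE3[where d=d and v=v and h=h and w=w, OF vh h1 w1 w2 dw])
  have pn0: "(2::int)^(n0-1) = 2^h" using n0 by simp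
  have A: "ball2 0 1 = (\<Union>n\<in>{2..n0 - 1}. ball2 (2 ^ (n - 1)) n) \<union> ball2 0 n0 \<union> ball2 (2 ^ (n0 - 1)) n0"
  proof
    show "ball2 0 1 \<subseteq> (\<Union>n\<in>{2..n0 - 1}. ball2 (2 ^ (n - 1)) n) \<union> ball2 0 n0 \<union> ball2 (2 ^ (n0 - 1)) n0"
    proof
      fix x assume x: "x \<in> ball2 0 1"
      then have px: "padic2 x" "x 1 = 0" unfolding ball_mem by auto
      have "x n0 = 0 \<or> (\<exists>n. 2 \<le> n \<and> n \<le> n0 \<and> x n = 2^(n-1))" by (rule DIG[OF px]) (use n0 in simp)
      then show "x \<in> (\<Union>n\<in>{2..n0 - 1}. ball2 (2 ^ (n - 1)) n) \<union> ball2 0 n0 \<union> ball2 (2 ^ (n0 - 1)) n0"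
      proof
        assume "x n0 = 0"
        then have "x \<in> ball2 0 n0" by (rule ball_zero[OF px(1)])
        then show ?thesis by (intro UnI1 UnI2)
      next
        assume "\<exists>n. 2 \<le> n \<and> n \<le> n0 \<and> x n = 2^(n-1)"
        then obtain n where n: "2 \<le> n" "n \<le> n0" "x n = 2^(n-1)" by blast
        have xb: "x \<in> ball2 (2 ^ (n - 1)) n" by (rule ball_pow[OF _ px(1) n(3)]) (use n in simp)
        show ?thesis
        proof (cases "n = n0")
          case True then show ?thesis using xb by (intro UnI2) simp
        next
          case False
          then have "n \<in> {2..n0 - 1}" using n by simp
          then have "x \<in> (\<Union>n\<in>{2..n0 - 1}. ball2 (2 ^ (n - 1)) n)" using xb by (intro UN_I)
          then show ?thesis by (intro UnI1)
        qed
      qed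
    qed
    have s1: "ball2 0 n0 \<subseteq> ball2 0 1" by (rule BSUB) (use n0 in simp_all)
    have s3: "ball2 (2 ^ (n0 - 1)) n0 \<subseteq> ball2 0 1" by (rule BSUB) (use n0 h1 in simp_all)
    have s2: "ball2 (2 ^ (n - 1)) n \<subseteq> ball2 0 1" if "n \<in> {2..n0 - 1}" for n
      by (rule BSUB) (use that in simp_all)
    show "(\<Union>n\<in>{2..n0 - 1}. ball2 (2 ^ (n - 1)) n) \<union> ball2 0 n0 \<union> ball2 (2 ^ (n0 - 1)) n0 \<subseteq> ball2 0 1"
      using s1 s2 s3 by blast
  qed
  have B: "\<forall>n\<in>{2..n0 - 1}. \<forall>m\<in>{2..n0 - 1}. n \<noteq> m \<longrightarrow> disjnt (ball2 (2 ^ (n - 1)) n) (ball2 (2 ^ (m - 1)) m)"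
  proof (intro ballI impI)
    fix n m assume n: "n \<in> {2..n0 - 1}" and m: "m \<in> {2..n0 - 1}" and nm: "n \<noteq> m"
    show "disjnt (ball2 (2 ^ (n - 1)) n) (ball2 (2 ^ (m - 1)) m)"
    proof (cases "n < m")
      case True then show ?thesis using DISJpow n by simp
    next
      case False then have "m < n" using nm by simp
      then have "disjnt (ball2 (2 ^ (m - 1)) m) (ball2 (2 ^ (n - 1)) n)" using DISJpow[of m n] m by simp
      then show ?thesis by (rule disjnt_sym)
    qed
  qed
  have C: "\<forall>n\<in>{2..n0 - 1}. disjnt (ball2 (2 ^ (n - 1)) n) (ball2 0 n0)
                          \<and> disjnt (ball2 (2 ^ (n - 1)) n) (ball2 (2 ^ (n0 - 1)) n0)"
  proof
    fix n assume n: "n \<in> {2..n0 - 1}"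
    have "disjnt (ball2 (2 ^ (n - 1)) n) (ball2 0 n0)" by (rule DISJ0) (use n n0 in simp_all)
    moreover have "disjnt (ball2 (2 ^ (n - 1)) n) (ball2 (2 ^ (n0 - 1)) n0)" by (rule DISJpow) (use n n0 in simp_all)
    ultimately show "disjnt (ball2 (2 ^ (n - 1)) n) (ball2 0 n0)
                          \<and> disjnt (ball2 (2 ^ (n - 1)) n) (ball2 (2 ^ (n0 - 1)) n0)" by blast
  qed
  have D: "disjnt (ball2 0 n0) (ball2 (2 ^ (n0 - 1)) n0)"
  proof (rule DISJ)
    show "n0 \<le> n0" by simp
    have "((2::int)^(n0-1) mod 2^n0) mod 2^n0 = 2^(n0-1)" using pw_modn[of n0] n0 by simp
    then show "((2::int)^(n0-1) mod 2^n0) mod 2^n0 \<noteq> 0 mod 2^n0" by simp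
  qed
  have E: "\<forall>n\<in>{2..n0 - 1}. typeI d (2 ^ (n - 1)) n (n - 2)"
  proof
    fix n assume n: "n \<in> {2..n0 - 1}"
    have "2 \<le> n" "2*n - 1 \<le> v" using n n0 vh by auto
    then show "typeI d (2 ^ (n - 1)) n (n - 2)" using T1[OF d _ dz] by blast
  qed
  have F: "typeI d 0 n0 (n0 - 2)"
  proof -
    have "typeI d 0 n0 (v - n0)" by (rule L1[OF d _ _ _ _ Q0]) (use n0 vh h1 in simp_all)
    moreover have "v - n0 = n0 - 2" using vh n0 by simp
    ultimately show ?thesis by simp
  qed
  have G: "typeI d (2 ^ (n0 - 1)) n0 (w - n0)"
  proof -
    have ev: "even ((2::int)^h)" using h1 by simp
    have Q3': "Qk d (2^h) n0 w" using Q3 n0 by simp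
    have "typeI d (2^h) n0 (w - n0)" by (rule L1[OF d ev _ _ _ Q3']) (use n0 vh w1 h1 in simp_all)
    then show ?thesis unfolding pn0 .
  qed
  have H: "\<forall>x\<in>ball2 0 1. \<exists>N. 2 \<le> N \<and> N \<le> v+2 \<and> Qk d (x N) N N"
  proof
    fix x assume x: "x \<in> ball2 0 1"
    then have px: "padic2 x" "x 1 = 0" unfolding ball_mem by auto
    have "x n0 = 0 \<or> (\<exists>n. 2 \<le> n \<and> n \<le> n0 \<and> x n = 2^(n-1))" by (rule DIG[OF px]) (use n0 in simp)
    then show "\<exists>N. 2 \<le> N \<and> N \<le> v+2 \<and> Qk d (x N) N N"
    proof
      assume "x n0 = 0"
      then have "Qk d (x v) v v" by (intro QSUB[OF px(1) Q0]) (use n0 vh h1 in simp_all)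
      moreover have "2 \<le> v" "v \<le> v+2" using vh h1 by simp_all
      ultimately show ?thesis by blast
    next
      assume "\<exists>n. 2 \<le> n \<and> n \<le> n0 \<and> x n = 2^(n-1)"
      then obtain n where n: "2 \<le> n" "n \<le> n0" "x n = 2^(n-1)" by blast
      show ?thesis
      proof (cases "n = n0")
        case True
        have "x (h+1) = 2^h mod 2^(h+1)" using n True n0 by simp
        then have "Qk d (x w) w w" by (intro QSUB[OF px(1) Q3]) (use w1 vh in simp_all)
        moreover have "2 \<le> w" "w \<le> v+2" using w1 w2 vh h1 by simp_all
        ultimately show ?thesis by blast
      next
        case False
        have "2*n-1 \<le> v" using n False n0 vh by simp
        then have Q: "Qk d (2^(n-1)) n (2*n-2)" by (rule QE1n[OF n(1) dz])
        have "Qk d (x (2*n-2)) (2*n-2) (2*n-2)"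
          by (rule QSUB[OF px(1) Q]) (use n pw_modn[of n] in simp_all)
        moreover have "2 \<le> 2*n-2" "2*n-2 \<le> v+2" using n n0 vh by linarith+
        ultimately show ?thesis by blast
      qed
    qed
  qed
  show ?thesis using A B C D E F G H Q0 Q3 by blast
qed



lemma WF: assumes d: "padic2 d" and dz: "\<forall>i\<le>v. d i = 0" and dv: "d (Suc v) = 2^v"
    and nsq: "d (v+3) \<noteq> 2^v" and wdef: "w = v2 (z2_sub d (z2_of_int (2^v)))"
  shows "Suc v \<le> w \<and> w \<le> v+2 \<and> (d (Suc w) - 2^v) mod 2^(Suc w) = 2^w"
proof -
  define e where "e = z2_sub d (z2_of_int (2^v))"
  have ee: "e n = (d n - 2^v) mod 2^n" for n
    unfolding e_def z2_sub_def z2_of_int_def by (simp add: mod_diff_right_eq)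
  have e3: "e (v+3) \<noteq> 0"
  proof
    assume "e (v+3) = 0"
    then have "(d (v+3) - 2^v) mod 2^(v+3) = 0" using ee by simp
    then have "2^(v+3) dvd (d (v+3) - 2^v)" by (simp add: mod_eq_0_iff_dvd)
    then have "d (v+3) mod 2^(v+3) = 2^v" by (rule mod_eqI) simp_all
    moreover have "d (v+3) mod 2^(v+3) = d (v+3)" using padic_range[OF d, of "v+3"] by simp
    ultimately show False using nsq by simp
  qed
  have e0: "e 0 = 0" using ee by simp
  have vf: "e (Suc (v2 e)) \<noteq> 0 \<and> (\<forall>i \<le> v2 e. e i = 0)" by (rule vfacts[OF e0 e3])
  have we: "w = v2 e" unfolding wdef e_def ..
  have ws: "e (Suc w) \<noteq> 0" and wz: "\<forall>i\<le>w. e i = 0" using vf we by auto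
  have w1: "Suc v \<le> w"
  proof (rule ccontr)
    assume "\<not> Suc v \<le> w"
    then have le: "Suc w \<le> Suc v" by simp
    have "d (Suc w) = d (Suc v) mod 2^(Suc w)" by (rule padic_coh[OF d le])
    then have "d (Suc w) = 2^v mod 2^(Suc w)" using dv by simp
    then have "e (Suc w) = (2^v mod 2^(Suc w) - 2^v) mod 2^(Suc w)" using ee by simp
    also have "\<dots> = (2^v - 2^v) mod 2^(Suc w)" by (rule mod_diff_cong) simp_all
    also have "\<dots> = 0" by simp
    finally show False using ws by simp
  qed
  have w2: "w \<le> v+2"
  proof (rule ccontr)
    assume "\<not> w \<le> v+2"
    then have "v+3 \<le> w" by simp
    then show False using wz e3 by simp
  qed
  define X where "X = e (Suc w)"
  have X0: "0 \<le> X" "X < 2^(Suc w)" unfolding X_def ee by simp_all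
  have "X mod 2^w = (d (Suc w) - 2^v) mod 2^w" unfolding X_def ee by (simp add: mod_mod_cancel)
  also have "\<dots> = (d w - 2^v) mod 2^w"
    by (rule mod_diff_cong) (simp_all add: padic_coh[OF d, of w "Suc w"])
  also have "\<dots> = 0" using wz ee[of w] by simp
  finally have "X = 2^w" using pow_step[OF X0] ws unfolding X_def by simp
  then show ?thesis using w1 w2 unfolding X_def ee by simp
qed

lemma DISJ2: "n \<le> m \<Longrightarrow> (c' mod 2^m) mod 2^n \<noteq> c mod 2^n \<Longrightarrow> disjnt (ball2 c n) (ball2 c' m) \<and> disjnt (ball2 c' m) (ball2 c n)"
  using DISJ disjnt_sym by metis

lemma ball_num: "padic2 x \<Longrightarrow> x n = c \<Longrightarrow> 0 \<le> c \<Longrightarrow> c < 2^n \<Longrightarrow> x \<in> ball2 c n"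
  unfolding ball_mem by simp



lemma NEXT': assumes "padic2 x" shows "x (n+1) = x n \<or> x (n+1) = x n + 2^n"
  using NEXT[OF assms, of n] by simp

lemma CASE1: assumes d: "padic2 d" and Q0: "Qk d 0 2 2" and Q3: "Qk d 2 2 3"
  shows "minimal_component d (ball2 0 2) \<and> minimal_component d (ball2 2 3)
       \<and> minimal_component d (ball2 6 3)
       \<and> pairwise disjnt {ball2 0 2, ball2 2 3, ball2 6 3}
       \<and> ball2 0 1 = ball2 0 2 \<union> ball2 2 3 \<union> ball2 6 3"
proof (intro conjI)
  show "minimal_component d (ball2 0 2)" by (rule L2[OF d _ _ Q0]) simp_all
  have Qa: "Qk d 2 3 3" by (rule QSUB2[OF Q3]) simp_all
  have Qb: "Qk d 6 3 3" by (rule QSUB2[OF Q3]) simp_all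
  show "minimal_component d (ball2 2 3)" by (rule L2[OF d _ _ Qa]) simp_all
  show "minimal_component d (ball2 6 3)" by (rule L2[OF d _ _ Qb]) simp_all
  have D1: "disjnt (ball2 0 2) (ball2 2 3) \<and> disjnt (ball2 2 3) (ball2 0 2)" by (rule DISJ2) simp_all
  have D2: "disjnt (ball2 0 2) (ball2 6 3) \<and> disjnt (ball2 6 3) (ball2 0 2)" by (rule DISJ2) simp_all
  have D3: "disjnt (ball2 2 3) (ball2 6 3) \<and> disjnt (ball2 6 3) (ball2 2 3)" by (rule DISJ2) simp_all
  show "pairwise disjnt {ball2 0 2, ball2 2 3, ball2 6 3}" using D1 D2 D3 by (auto simp: pairwise_insert)
  show "ball2 0 1 = ball2 0 2 \<union> ball2 2 3 \<union> ball2 6 3"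
  proof
    show "ball2 0 1 \<subseteq> ball2 0 2 \<union> ball2 2 3 \<union> ball2 6 3"
    proof
      fix x assume "x \<in> ball2 0 1"
      then have px: "padic2 x" and x1: "x 1 = 0" unfolding ball_mem by auto
      have "x 2 = 0 \<or> x 2 = 2" using NEXT'[OF px, of 1] x1 by (simp add: numeral_2_eq_2)
      then show "x \<in> ball2 0 2 \<union> ball2 2 3 \<union> ball2 6 3"
      proof
        assume "x 2 = 0" then show ?thesis using ball_num[OF px, of 2 0] by simp
      next
        assume "x 2 = 2"
        then have "x 3 = 2 \<or> x 3 = 6" using NEXT'[OF px, of 2] by simp
        then show ?thesis using ball_num[OF px, of 3 2] ball_num[OF px, of 3 6] by auto
      qed
    qed
    show "ball2 0 2 \<union> ball2 2 3 \<union> ball2 6 3 \<subseteq> ball2 0 1"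
      using BSUB[of 2 0] BSUB[of 3 2] BSUB[of 3 6] by simp
  qed
qed

lemma CASE2: assumes d: "padic2 d" and Q0: "Qk d 0 2 2" and Q3: "Qk d 2 2 4"
  shows "minimal_component d (ball2 0 2) \<and> minimal_component d (ball2 2 4)
       \<and> minimal_component d (ball2 6 4) \<and> minimal_component d (ball2 10 4)
       \<and> minimal_component d (ball2 14 4)
       \<and> pairwise disjnt {ball2 0 2, ball2 2 4, ball2 6 4, ball2 10 4, ball2 14 4}
       \<and> ball2 0 1 = ball2 0 2 \<union> ball2 2 4 \<union> ball2 6 4 \<union> ball2 10 4 \<union> ball2 14 4"
proof (intro conjI)
  show "minimal_component d (ball2 0 2)" by (rule L2[OF d _ _ Q0]) simp_all
  have Qa: "Qk d 2 4 4" by (rule QSUB2[OF Q3]) simp_all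
  have Qb: "Qk d 6 4 4" by (rule QSUB2[OF Q3]) simp_all
  have Qc: "Qk d 10 4 4" by (rule QSUB2[OF Q3]) simp_all
  have Qe: "Qk d 14 4 4" by (rule QSUB2[OF Q3]) simp_all
  show "minimal_component d (ball2 2 4)" by (rule L2[OF d _ _ Qa]) simp_all
  show "minimal_component d (ball2 6 4)" by (rule L2[OF d _ _ Qb]) simp_all
  show "minimal_component d (ball2 10 4)" by (rule L2[OF d _ _ Qc]) simp_all
  show "minimal_component d (ball2 14 4)" by (rule L2[OF d _ _ Qe]) simp_all
  have D1: "disjnt (ball2 0 2) (ball2 2 4) \<and> disjnt (ball2 2 4) (ball2 0 2)" by (rule DISJ2) simp_all
  have D2: "disjnt (ball2 0 2) (ball2 6 4) \<and> disjnt (ball2 6 4) (ball2 0 2)" by (rule DISJ2) simp_all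
  have D3: "disjnt (ball2 0 2) (ball2 10 4) \<and> disjnt (ball2 10 4) (ball2 0 2)" by (rule DISJ2) simp_all
  have D4: "disjnt (ball2 0 2) (ball2 14 4) \<and> disjnt (ball2 14 4) (ball2 0 2)" by (rule DISJ2) simp_all
  have D5: "disjnt (ball2 2 4) (ball2 6 4) \<and> disjnt (ball2 6 4) (ball2 2 4)" by (rule DISJ2) simp_all
  have D6: "disjnt (ball2 2 4) (ball2 10 4) \<and> disjnt (ball2 10 4) (ball2 2 4)" by (rule DISJ2) simp_all
  have D7: "disjnt (ball2 2 4) (ball2 14 4) \<and> disjnt (ball2 14 4) (ball2 2 4)" by (rule DISJ2) simp_all
  have D8: "disjnt (ball2 6 4) (ball2 10 4) \<and> disjnt (ball2 10 4) (ball2 6 4)" by (rule DISJ2) simp_all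
  have D9: "disjnt (ball2 6 4) (ball2 14 4) \<and> disjnt (ball2 14 4) (ball2 6 4)" by (rule DISJ2) simp_all
  have D10: "disjnt (ball2 10 4) (ball2 14 4) \<and> disjnt (ball2 14 4) (ball2 10 4)" by (rule DISJ2) simp_all
  show "pairwise disjnt {ball2 0 2, ball2 2 4, ball2 6 4, ball2 10 4, ball2 14 4}"
    using D1 D2 D3 D4 D5 D6 D7 D8 D9 D10 by (auto simp: pairwise_insert)
  show "ball2 0 1 = ball2 0 2 \<union> ball2 2 4 \<union> ball2 6 4 \<union> ball2 10 4 \<union> ball2 14 4"
  proof
    show "ball2 0 1 \<subseteq> ball2 0 2 \<union> ball2 2 4 \<union> ball2 6 4 \<union> ball2 10 4 \<union> ball2 14 4"
    proof
      fix x assume "x \<in> ball2 0 1"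
      then have px: "padic2 x" and x1: "x 1 = 0" unfolding ball_mem by auto
      have "x 2 = 0 \<or> x 2 = 2" using NEXT'[OF px, of 1] x1 by (simp add: numeral_2_eq_2)
      then show "x \<in> ball2 0 2 \<union> ball2 2 4 \<union> ball2 6 4 \<union> ball2 10 4 \<union> ball2 14 4"
      proof
        assume "x 2 = 0" then show ?thesis using ball_num[OF px, of 2 0] by simp
      next
        assume "x 2 = 2"
        then have "x 3 = 2 \<or> x 3 = 6" using NEXT'[OF px, of 2] by simp
        moreover have "x 4 = x 3 \<or> x 4 = x 3 + 8" using NEXT'[OF px, of 3] by simp
        ultimately have "x 4 = 2 \<or> x 4 = 6 \<or> x 4 = 10 \<or> x 4 = 14" by auto
        then show ?thesis using ball_num[OF px, of 4 2] ball_num[OF px, of 4 6]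
            ball_num[OF px, of 4 10] ball_num[OF px, of 4 14] by auto
      qed
    qed
    show "ball2 0 2 \<union> ball2 2 4 \<union> ball2 6 4 \<union> ball2 10 4 \<union> ball2 14 4 \<subseteq> ball2 0 1"
      using BSUB[of 2 0] BSUB[of 4 2] BSUB[of 4 6] BSUB[of 4 10] BSUB[of 4 14] by simp
  qed
qed

theorem theorem6p6:
  fixes d :: "nat \<Rightarrow> int"
  assumes hd: "padic2 d"
    and h4: "d 2 = 0"
    and hsq: "\<not> (\<exists>y. padic2 y \<and> z2_mult y y = d)"
  shows "fmap d ` ball2 1 1 \<subseteq> ball2 0 1
    \<and> (\<exists>\<E>. finite \<E> \<and> (\<forall>E\<in>\<E>. minimal_component d E) \<and> pairwise disjnt \<E> \<and> \<Union>\<E> = ball2 0 1)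
    \<and> (v2 d = 2 \<and> v2 (z2_sub d (z2_of_int 4)) = 3 \<longrightarrow>
         minimal_component d (ball2 0 2) \<and> minimal_component d (ball2 2 3)
       \<and> minimal_component d (ball2 6 3)
       \<and> pairwise disjnt {ball2 0 2, ball2 2 3, ball2 6 3}
       \<and> ball2 0 1 = ball2 0 2 \<union> ball2 2 3 \<union> ball2 6 3)
    \<and> (v2 d = 2 \<and> v2 (z2_sub d (z2_of_int 4)) = 4 \<longrightarrow>
         minimal_component d (ball2 0 2) \<and> minimal_component d (ball2 2 4)
       \<and> minimal_component d (ball2 6 4) \<and> minimal_component d (ball2 10 4)
       \<and> minimal_component d (ball2 14 4)
       \<and> pairwise disjnt {ball2 0 2, ball2 2 4, ball2 6 4, ball2 10 4, ball2 14 4}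
       \<and> ball2 0 1 = ball2 0 2 \<union> ball2 2 4 \<union> ball2 6 4 \<union> ball2 10 4 \<union> ball2 14 4)
    \<and> (let n0 = v2 d div 2 + 1 in
        v2 d \<ge> 3 \<and> odd (v2 d) \<longrightarrow>
          ball2 0 1 = (\<Union>n\<in>{2..n0}. ball2 (2 ^ (n - 1)) n) \<union> ball2 0 n0
        \<and> (\<forall>n\<in>{2..n0}. \<forall>m\<in>{2..n0}. n \<noteq> m \<longrightarrow> disjnt (ball2 (2 ^ (n - 1)) n) (ball2 (2 ^ (m - 1)) m))
        \<and> (\<forall>n\<in>{2..n0}. disjnt (ball2 (2 ^ (n - 1)) n) (ball2 0 n0))
        \<and> (\<forall>n\<in>{2..n0}. typeI d (2 ^ (n - 1)) n (n - 2))
        \<and> typeI d 0 n0 (n0 - 1))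
    \<and> (let n0 = v2 d div 2 + 1 in
        v2 d \<ge> 3 \<and> even (v2 d) \<longrightarrow>
          ball2 0 1 = (\<Union>n\<in>{2..n0 - 1}. ball2 (2 ^ (n - 1)) n) \<union> ball2 0 n0 \<union> ball2 (2 ^ (n0 - 1)) n0
        \<and> (\<forall>n\<in>{2..n0 - 1}. \<forall>m\<in>{2..n0 - 1}. n \<noteq> m \<longrightarrow> disjnt (ball2 (2 ^ (n - 1)) n) (ball2 (2 ^ (m - 1)) m))
        \<and> (\<forall>n\<in>{2..n0 - 1}. disjnt (ball2 (2 ^ (n - 1)) n) (ball2 0 n0)
                          \<and> disjnt (ball2 (2 ^ (n - 1)) n) (ball2 (2 ^ (n0 - 1)) n0))
        \<and> disjnt (ball2 0 n0) (ball2 (2 ^ (n0 - 1)) n0)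
        \<and> (\<forall>n\<in>{2..n0 - 1}. typeI d (2 ^ (n - 1)) n (n - 2))
        \<and> typeI d 0 n0 (n0 - 2)
        \<and> typeI d (2 ^ (n0 - 1)) n0 (v2 (z2_sub d (z2_of_int (2 ^ v2 d))) - n0))"
proof -
  have d1: "d 1 = 0" using padic_coh[OF hd, of 1 2] h4 by simp
  have d0: "d 0 = 0" using padic_range[OF hd, of 0] by simp
  have dnz: "\<exists>n. d n \<noteq> 0"
  proof (rule ccontr)
    assume "\<not> (\<exists>n. d n \<noteq> 0)"
    then have "z2_mult (z2_of_int 0) (z2_of_int 0) = d" by (auto simp: z2_mult_def z2_of_int_def)
    then show False using hsq padic_of_int by blast
  qed
  then obtain n1 where n1: "d n1 \<noteq> 0" by blast
  define v where "v = v2 d"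
  have vv: "v2 d = v" unfolding v_def ..
  have vf: "d (Suc v) \<noteq> 0" "\<forall>i\<le>v. d i = 0" using vfacts[OF d0 n1] unfolding v_def by auto
  have dv: "d (Suc v) = 2^v" using NEXT[OF hd, of v] vf by auto
  have v2: "2 \<le> v"
  proof (rule ccontr)
    assume "\<not> 2 \<le> v" then have "Suc v \<le> 2" by simp
    then have "d (Suc v) = d 2 mod 2^(Suc v)" by (rule padic_coh[OF hd])
    then show False using h4 vf(1) by simp
  qed
  have nsq: "d (v+3) \<noteq> 2^v" if "v = 2*h" for h
  proof
    assume "d (v+3) = 2^v"
    then have "d (2*h+3) = 2^(2*h)" using that by simp
    then have "\<exists>y. padic2 y \<and> z2_mult y y = d" by (rule sqrt_exists[OF hd])
    then show False using hsq by blast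
  qed
  have PA: "fmap d ` ball2 1 1 \<subseteq> ball2 0 1"
  proof
    fix z assume "z \<in> fmap d ` ball2 1 1"
    then obtain x where x: "padic2 x" "x 1 = 1" "z = fmap d x" unfolding ball2_def by auto
    have "fmap d x 1 = 0" using x d1 by (simp add: fmap_n)
    then show "z \<in> ball2 0 1" unfolding ball_mem x(3) using padic_fmap[OF hd x(1)] by simp
  qed
  define h where "h = v div 2"
  show ?thesis
  proof (cases "even v")
    case False
    have vh: "v = 2*h+1" "1 \<le> h" using False v2 unfolding h_def by (auto elim!: oddE)
    have n0: "v div 2 + 1 = h + 1" unfolding h_def ..
    note O = ODD[OF hd vh(1) vh(2) vf(2) dv refl]
    have cov: "\<forall>x\<in>ball2 0 1. \<exists>N. 2 \<le> N \<and> N \<le> v+2 \<and> Qk d (x N) N N" using O by blast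
    show ?thesis
      unfolding vv Let_def n0
      apply (intro conjI)
      subgoal by (rule PA)
      subgoal by (rule EXIST[OF hd cov])
      subgoal apply (rule impI) apply (erule conjE) using False by simp
      subgoal apply (rule impI) apply (erule conjE) using False by simp
      subgoal using O by blast
      subgoal using False by blast
      done
  next
    case True
    have vh: "v = 2*h" "1 \<le> h" using True v2 unfolding h_def by (auto elim!: evenE)
    have n0: "v div 2 + 1 = h + 1" unfolding h_def ..
    define w where "w = v2 (z2_sub d (z2_of_int (2^v)))"
    have W: "Suc v \<le> w \<and> w \<le> v+2 \<and> (d (Suc w) - 2^v) mod 2^(Suc w) = 2^w"
      by (rule WF[OF hd vf(2) dv nsq[OF vh(1)] w_def])
    have W1: "Suc v \<le> w" and W2: "w \<le> v+2" and W3: "(d (Suc w) - 2^v) mod 2^(Suc w) = 2^w" using W by auto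
    note Ev = EVEN[OF hd vh(1) vh(2) vf(2) dv refl W1 W2 W3]
    have cov: "\<forall>x\<in>ball2 0 1. \<exists>N. 2 \<le> N \<and> N \<le> v+2 \<and> Qk d (x N) N N" using Ev by blast
    have Q0: "Qk d 0 (h+1) v" and Q3: "Qk d (2^h) (h+1) w" using Ev by blast+
    have c12: "v = 2 \<Longrightarrow> Qk d 0 2 2 \<and> Qk d 2 2 w \<and> w = v2 (z2_sub d (z2_of_int 4))"
    proof -
      assume v2': "v = 2"
      then have "h = 1" using vh by simp
      then show ?thesis using Q0 Q3 v2' unfolding w_def by (simp add: numeral_2_eq_2)
    qed
    show ?thesis
      unfolding vv Let_def n0 w_def[symmetric]
      apply (intro conjI)
      subgoal by (rule PA)
      subgoal by (rule EXIST[OF hd cov])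
      subgoal
      proof (rule impI)
        assume a: "v = 2 \<and> v2 (z2_sub d (z2_of_int 4)) = 3"
        then have "Qk d 0 2 2" "Qk d 2 2 3" using c12 by auto
        then show "minimal_component d (ball2 0 2) \<and> minimal_component d (ball2 2 3)
       \<and> minimal_component d (ball2 6 3)
       \<and> pairwise disjnt {ball2 0 2, ball2 2 3, ball2 6 3}
       \<and> ball2 0 1 = ball2 0 2 \<union> ball2 2 3 \<union> ball2 6 3" by (rule CASE1[OF hd])
      qed
      subgoal
      proof (rule impI)
        assume a: "v = 2 \<and> v2 (z2_sub d (z2_of_int 4)) = 4"
        then have "Qk d 0 2 2" "Qk d 2 2 4" using c12 by auto
        then show "minimal_component d (ball2 0 2) \<and> minimal_component d (ball2 2 4)
       \<and> minimal_component d (ball2 6 4) \<and> minimal_component d (ball2 10 4)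
       \<and> minimal_component d (ball2 14 4)
       \<and> pairwise disjnt {ball2 0 2, ball2 2 4, ball2 6 4, ball2 10 4, ball2 14 4}
       \<and> ball2 0 1 = ball2 0 2 \<union> ball2 2 4 \<union> ball2 6 4 \<union> ball2 10 4 \<union> ball2 14 4" by (rule CASE2[OF hd])
      qed
      subgoal using True by blast
      subgoal using Ev by blast
      done
  qed
qed


end
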